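(* Let $k$ be a field and let $T$ be a forest. Let $v$ be a vertex of $T$ with neighbours $v_1,\dots,v_n$ ($n\geqslant 1$) such that $v_1,\dots,v_{n-1}$ all have degree $1$, and such that if $n=1$ then $v_1$ has degree $1$. Let $T'=T\setminus\{v_1\}$ and $T''=T\setminus\{v,v_1,\dots,v_n\}$. Then for all $i,d$, $$\beta_{i,d}(T)=\beta_{i,d}(T')+\sum_{j=0}^{n-1}\binom{n-1}{j}\beta_{i-(j+1),\,d-(j+2)}(T'').$$
   Context: A forest is a finite simple graph with no cycles. For a graph $G$ and a set $S$ of its vertices, $G\setminus S$ is the induced subgraph on the remaining vertices. For $G$ with vertices $x_1,\dots,x_N$, $R=k[x_1,\dots,x_N]$ with the standard $\mathbb{N}$-grading, $I(G)$ is generated by $x_ax_b$ for all edges $\{x_a,x_b\}$, and $\beta_{i,d}(G)=\dim_k(\operatorname{Tor}_i^R(R/I(G),k))_d$. Betti numbers with a negative index are $0$; if $T''$ has no vertices, its ring is $k$, so $\beta_{0,0}(T'')=1$ and all its other Betti numbers are $0$. *)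

theory Defs
  imports Complex_Main "HOL-Library.Function_Algebras"
begin

definition simple_graph :: "'v set \<Rightarrow> 'v set set \<Rightarrow> bool" where
  "simple_graph V E \<longleftrightarrow> finite V \<and> (\<forall>e\<in>E. \<exists>a b. e = {a, b} \<and> a \<noteq> b \<and> a \<in> V \<and> b \<in> V)"

definition is_cycle :: "'v set set \<Rightarrow> 'v list \<Rightarrow> bool" where
  "is_cycle E cs \<longleftrightarrow> length cs \<ge> 3 \<and> distinct cs \<and>
     (\<forall>i < length cs. {cs ! i, cs ! ((i + 1) mod length cs)} \<in> E)"

definition forest :: "'v set \<Rightarrow> 'v set set \<Rightarrow> bool" where
  "forest V E \<longleftrightarrow> simple_graph V E \<and> \<not> (\<exists>cs. set cs \<subseteq> V \<and> is_cycle E cs)"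

definition neighbours :: "'v set set \<Rightarrow> 'v \<Rightarrow> 'v set" where
  "neighbours E v = {u. {v, u} \<in> E}"

definition degree :: "'v set set \<Rightarrow> 'v \<Rightarrow> nat" where
  "degree E v = card (neighbours E v)"

text \<open>Edges of the induced subgraph on the vertex set W; G \ S is (V - S, induced E (V - S)).\<close>
definition induced :: "'v set set \<Rightarrow> 'v set \<Rightarrow> 'v set set" where
  "induced E W = {e \<in> E. e \<subseteq> W}"

text \<open>Monomials in the variables V of degree e are exponent vectors supported in V.
A monomial is standard (nonzero in R/I(G)) iff it is divisible by no x_a x_b for an
edge {a,b}. The degree-d part of (K(x;R) tensor R/I(G))_i has the k-basis m e_S with
S a subset of V, card S = i, m a standard monomial of degree d - i.\<close>

definition monoms :: "'v set \<Rightarrow> nat \<Rightarrow> ('v \<Rightarrow> nat) set" where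
  "monoms V e = {m. (\<forall>u. u \<notin> V \<longrightarrow> m u = 0) \<and> sum m V = e}"

definition std_mono :: "'v set set \<Rightarrow> ('v \<Rightarrow> nat) \<Rightarrow> bool" where
  "std_mono E m \<longleftrightarrow> (\<forall>e\<in>E. \<exists>u\<in>e. m u = 0)"

definition kbasis :: "'v set \<Rightarrow> 'v set set \<Rightarrow> nat \<Rightarrow> nat \<Rightarrow> ('v set \<times> ('v \<Rightarrow> nat)) set" where
  "kbasis V E i d = {(S, m). S \<subseteq> V \<and> card S = i \<and> i \<le> d \<and> m \<in> monoms V (d - i) \<and> std_mono E m}"

text \<open>Coefficient of the basis element y in the Koszul differential of x:
d(m e_S) = sum over s in S of (-1)^(number of t in S below s) (x_s m) e_(S - {s}).\<close>
definition kcoef :: "('v::linorder set \<times> ('v \<Rightarrow> nat)) \<Rightarrow> ('v set \<times> ('v \<Rightarrow> nat)) \<Rightarrow> 'k::field" where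
  "kcoef x y = (case x of (S, m) \<Rightarrow> case y of (T, m') \<Rightarrow>
     if T \<subseteq> S \<and> card (S - T) = 1 \<and> m' = m(the_elem (S - T) := Suc (m (the_elem (S - T))))
     then (- 1) ^ card {t \<in> S. t < the_elem (S - T)} else 0)"

definition kchains :: "'v set \<Rightarrow> 'v set set \<Rightarrow> nat \<Rightarrow> nat \<Rightarrow> (('v set \<times> ('v \<Rightarrow> nat)) \<Rightarrow> 'k::field) set" where
  "kchains V E i d = {c. \<forall>x. x \<notin> kbasis V E i d \<longrightarrow> c x = 0}"

definition kdiff :: "'v::linorder set \<Rightarrow> 'v set set \<Rightarrow> nat \<Rightarrow> nat \<Rightarrow>
    (('v set \<times> ('v \<Rightarrow> nat)) \<Rightarrow> 'k::field) \<Rightarrow> (('v set \<times> ('v \<Rightarrow> nat)) \<Rightarrow> 'k)" where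
  "kdiff V E i d c = (\<lambda>y. if y \<in> kbasis V E (i - 1) d
      then (\<Sum>x\<in>kbasis V E i d. c x * kcoef x y) else 0)"

definition kscale :: "'k::field \<Rightarrow> ('a \<Rightarrow> 'k) \<Rightarrow> ('a \<Rightarrow> 'k)" where
  "kscale a f = (\<lambda>x. a * f x)"

definition kcycles :: "'v::linorder set \<Rightarrow> 'v set set \<Rightarrow> nat \<Rightarrow> nat \<Rightarrow> (('v set \<times> ('v \<Rightarrow> nat)) \<Rightarrow> 'k::field) set" where
  "kcycles V E i d = (if i = 0 then kchains V E 0 d else {c \<in> kchains V E i d. kdiff V E i d c = 0})"

definition kboundaries :: "'v::linorder set \<Rightarrow> 'v set set \<Rightarrow> nat \<Rightarrow> nat \<Rightarrow> (('v set \<times> ('v \<Rightarrow> nat)) \<Rightarrow> 'k::field) set" where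
  "kboundaries V E i d = kdiff V E (Suc i) d ` kchains V E (Suc i) d"

text \<open>dim_k Tor_i^R(R/I(G), k)_d = dim_k H_i(K(x;R) tensor R/I(G))_d, for i, d \<ge> 0.\<close>
definition betti_nat :: "'k::field itself \<Rightarrow> 'v::linorder set \<Rightarrow> 'v set set \<Rightarrow> nat \<Rightarrow> nat \<Rightarrow> nat" where
  "betti_nat _ V E i d =
     vector_space.dim (kscale :: 'k \<Rightarrow> _) (kcycles V E i d :: (_ \<Rightarrow> 'k) set)
     - vector_space.dim (kscale :: 'k \<Rightarrow> _) (kboundaries V E i d :: (_ \<Rightarrow> 'k) set)"

definition betti :: "'k::field itself \<Rightarrow> 'v::linorder set \<Rightarrow> 'v set set \<Rightarrow> int \<Rightarrow> int \<Rightarrow> nat" where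
  "betti K V E i d = (if i < 0 \<or> d < 0 then 0 else betti_nat K V E (nat i) (nat d))"

end

theory Submission
  imports Defs
begin


interpretation kv: vector_space "kscale :: 'a::field \<Rightarrow> ('b \<Rightarrow> 'a) \<Rightarrow> ('b \<Rightarrow> 'a)"
  by unfold_locales (auto simp: kscale_def fun_eq_iff algebra_simps)

context vector_space begin

lemma fin_basis:
  assumes "U \<subseteq> span F" "finite F"
  obtains B where "B \<subseteq> U" "independent B" "U \<subseteq> span B" "card B = dim U" "finite B"
proof -
  obtain B where B: "B \<subseteq> U" "independent B" "U \<subseteq> span B" "card B = dim U"
    using basis_exists by blast
  have "finite B" using independent_span_bound[OF assms(2) B(2)] B(1) assms(1) by blast
  then show ?thesis using B that by blast
qed

lemma dim_mono_fin:
  assumes "U \<subseteq> W" "W \<subseteq> span F" "finite F"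
  shows "dim U \<le> dim W"
proof -
  obtain BU where BU: "BU \<subseteq> U" "independent BU" "U \<subseteq> span BU" "card BU = dim U"
    using basis_exists by blast
  obtain BW where BW: "BW \<subseteq> W" "independent BW" "W \<subseteq> span BW" "card BW = dim W" "finite BW"
    using fin_basis assms(2,3) by blast
  have "BU \<subseteq> span BW" using BU(1) assms(1) BW(3) by blast
  from independent_span_bound[OF BW(5) BU(2) this] show ?thesis using BU BW by simp
qed

lemma dim_direct:
  assumes U: "subspace U" and W: "subspace W" and UW: "U \<inter> W = {0}"
    and F: "U \<subseteq> span F" "W \<subseteq> span F" "finite F"
  shows "dim {u + w | u w. u \<in> U \<and> w \<in> W} = dim U + dim W"
proof -
  obtain BU where BU: "BU \<subseteq> U" "independent BU" "U \<subseteq> span BU" "card BU = dim U" "finite BU"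
    using fin_basis F(1,3) by blast
  obtain BW where BW: "BW \<subseteq> W" "independent BW" "W \<subseteq> span BW" "card BW = dim W" "finite BW"
    using fin_basis F(2,3) by blast
  have "0 \<notin> BU" using BU(2) dependent_zero by blast
  have disj: "BU \<inter> BW = {}"
  proof (rule ccontr)
    assume "BU \<inter> BW \<noteq> {}"
    then obtain x where "x \<in> BU" "x \<in> BW" by blast
    then have "x \<in> U \<inter> W" using BU(1) BW(1) by blast
    then have "x = 0" using UW by blast
    then show False using \<open>x \<in> BU\<close> \<open>0 \<notin> BU\<close> by simp
  qed
  have spU: "span BU \<subseteq> U" using span_minimal[OF BU(1) U] .
  have spW: "span BW \<subseteq> W" using span_minimal[OF BW(1) W] .
  have ind: "independent (BU \<union> BW)"
  proof
    assume "dependent (BU \<union> BW)"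
    then obtain u where u: "\<exists>v\<in>BU \<union> BW. u v \<noteq> 0" "(\<Sum>v\<in>BU \<union> BW. u v *s v) = 0"
      using dependent_finite[of "BU \<union> BW"] BU(5) BW(5) by auto
    define a where "a = (\<Sum>v\<in>BU. u v *s v)"
    define b where "b = (\<Sum>v\<in>BW. u v *s v)"
    have "a + b = (\<Sum>v\<in>BU \<union> BW. u v *s v)" unfolding a_def b_def
      by (rule sum.union_disjoint[symmetric, OF BU(5) BW(5) disj])
    then have ab: "a + b = 0" using u(2) by (rule trans)
    have "a \<in> U" unfolding a_def by (rule subsetD[OF spU], intro span_sum span_scale span_base) auto
    have "b \<in> W" unfolding b_def by (rule subsetD[OF spW], intro span_sum span_scale span_base) auto
    have "a = - b" unfolding eq_neg_iff_add_eq_0 by (rule ab)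
    then have "a \<in> W" using \<open>b \<in> W\<close> subspace_neg[OF W] by simp
    then have a0: "a = 0" using \<open>a \<in> U\<close> UW by blast
    then have b0: "b = 0" using ab by simp
    have "\<not> (\<exists>v\<in>BU. u v \<noteq> 0)"
    proof
      assume "\<exists>v\<in>BU. u v \<noteq> 0"
      then have "dependent BU" unfolding dependent_finite[OF BU(5)]
        using a0 a_def by (intro exI[of _ u]) simp
      then show False using BU(2) by simp
    qed
    moreover have "\<not> (\<exists>v\<in>BW. u v \<noteq> 0)"
    proof
      assume "\<exists>v\<in>BW. u v \<noteq> 0"
      then have "dependent BW" unfolding dependent_finite[OF BW(5)]
        using b0 b_def by (intro exI[of _ u]) simp
      then show False using BW(2) by simp
    qed
    ultimately show False using u(1) by blast
  qed
  let ?S = "{u + w | u w. u \<in> U \<and> w \<in> W}"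
  have sub: "BU \<union> BW \<subseteq> ?S"
  proof
    fix x assume "x \<in> BU \<union> BW"
    then show "x \<in> ?S"
    proof
      assume "x \<in> BU" then have "x \<in> U" using BU(1) by blast
      then show ?thesis using subspace_0[OF W] by (intro CollectI exI[of _ x] exI[of _ 0]) auto
    next
      assume "x \<in> BW" then have "x \<in> W" using BW(1) by blast
      then show ?thesis using subspace_0[OF U] by (intro CollectI exI[of _ 0] exI[of _ x]) auto
    qed
  qed
  have spn: "?S \<subseteq> span (BU \<union> BW)"
  proof
    fix x assume "x \<in> ?S"
    then obtain a b where "x = a + b" "a \<in> U" "b \<in> W" by blast
    then have "a \<in> span (BU \<union> BW)" "b \<in> span (BU \<union> BW)"
      using BU(3) BW(3) span_mono[of BU "BU \<union> BW"] span_mono[of BW "BU \<union> BW"] by blast+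
    then show "x \<in> span (BU \<union> BW)" using \<open>x = a + b\<close> span_add by blast
  qed
  have "card (BU \<union> BW) = dim ?S" using basis_card_eq_dim[OF sub spn ind] .
  then show ?thesis using card_Un_disjoint[OF BU(5) BW(5) disj] BU(4) BW(4) by simp
qed

lemma dim_inj_image:
  assumes f: "module_hom scale scale f" and U: "subspace U" and inj: "inj_on f U"
    and F: "U \<subseteq> span F" "finite F"
  shows "dim (f ` U) = dim U"
proof -
  interpret fh: module_hom scale scale f by (rule f)
  obtain B where B: "B \<subseteq> U" "independent B" "U \<subseteq> span B" "card B = dim U" "finite B"
    using fin_basis F by blast
  have spB: "span B \<subseteq> U" using span_minimal[OF B(1) U] .
  have injB: "inj_on f (span B)" using inj_on_subset[OF inj spB] .
  have ind: "independent (f ` B)" using fh.independent_injective_image[OF B(2) injB] .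
  have "f ` B \<subseteq> f ` U" using B(1) by blast
  moreover have "f ` U \<subseteq> span (f ` B)" using fh.span_image[of B] B(3) by blast
  ultimately have "card (f ` B) = dim (f ` U)" using basis_card_eq_dim ind by blast
  moreover have "card (f ` B) = card B" using card_image inj_on_subset[OF inj B(1)] by blast
  ultimately show ?thesis using B(4) by simp
qed

lemma dim_zero_space: "dim {0} = 0"
  using dim_span[of "{}"] dim_eq_card_independent[OF independent_empty] by simp

end


section \<open>Generic based chain complexes\<close>

definition ev :: "'b \<Rightarrow> 'b \<Rightarrow> 'k::field" where "ev x = (\<lambda>y. if y = x then 1 else 0)"

definition ch :: "(nat \<Rightarrow> 'b set) \<Rightarrow> nat \<Rightarrow> ('b \<Rightarrow> 'k::field) set" where
  "ch K i = {f. \<forall>x. x \<notin> K i \<longrightarrow> f x = 0}"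

definition bd :: "(nat \<Rightarrow> 'b set) \<Rightarrow> ('b \<Rightarrow> 'b \<Rightarrow> 'k::field) \<Rightarrow> nat \<Rightarrow> ('b \<Rightarrow> 'k) \<Rightarrow> 'b \<Rightarrow> 'k" where
  "bd K c i f = (\<lambda>y. if y \<in> K (i - 1) then (\<Sum>x\<in>K i. f x * c x y) else 0)"

definition cyc :: "(nat \<Rightarrow> 'b set) \<Rightarrow> ('b \<Rightarrow> 'b \<Rightarrow> 'k::field) \<Rightarrow> nat \<Rightarrow> ('b \<Rightarrow> 'k) set" where
  "cyc K c i = (if i = 0 then ch K 0 else {f \<in> ch K i. bd K c i f = 0})"

definition bnd :: "(nat \<Rightarrow> 'b set) \<Rightarrow> ('b \<Rightarrow> 'b \<Rightarrow> 'k::field) \<Rightarrow> nat \<Rightarrow> ('b \<Rightarrow> 'k) set" where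
  "bnd K c i = bd K c (Suc i) ` ch K (Suc i)"

definition hom :: "(nat \<Rightarrow> 'b set) \<Rightarrow> ('b \<Rightarrow> 'b \<Rightarrow> 'k::field) \<Rightarrow> nat \<Rightarrow> nat" where
  "hom K c i = kv.dim (cyc K c i) - kv.dim (bnd K c i)"

definition closedc :: "(nat \<Rightarrow> 'b set) \<Rightarrow> (nat \<Rightarrow> 'b set) \<Rightarrow> ('b \<Rightarrow> 'b \<Rightarrow> 'k::field) \<Rightarrow> bool" where
  "closedc P K c \<longleftrightarrow> (\<forall>i. P i \<subseteq> K i) \<and> (\<forall>i x y. x \<in> P (Suc i) \<longrightarrow> y \<in> K i \<longrightarrow> c x y \<noteq> 0 \<longrightarrow> y \<in> P i)"

definition dsq :: "(nat \<Rightarrow> 'b set) \<Rightarrow> ('b \<Rightarrow> 'b \<Rightarrow> 'k::field) \<Rightarrow> bool" where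
  "dsq K c \<longleftrightarrow> (\<forall>i f. f \<in> ch K (Suc (Suc i)) \<longrightarrow> bd K c (Suc i) (bd K c (Suc (Suc i)) f) = 0)"

definition fin :: "(nat \<Rightarrow> 'b set) \<Rightarrow> bool" where "fin K \<longleftrightarrow> (\<forall>i. finite (K i))"

definition rst :: "'b set \<Rightarrow> ('b \<Rightarrow> 'k::field) \<Rightarrow> 'b \<Rightarrow> 'k" where
  "rst A f = (\<lambda>x. if x \<in> A then f x else 0)"

definition ssum :: "('a::ab_group_add) set \<Rightarrow> 'a set \<Rightarrow> 'a set" where
  "ssum U W = {u + w | u w. u \<in> U \<and> w \<in> W}"

lemma sum_fun_apply: "(\<Sum>x\<in>A. f x) y = (\<Sum>x\<in>A. f x y)"
  by (induction A rule: infinite_finite_induct) auto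

lemma ch_zero[simp]: "0 \<in> ch K i" by (simp add: ch_def)

lemma ch_add[simp]: "f \<in> ch K i \<Longrightarrow> g \<in> ch K i \<Longrightarrow> f + g \<in> ch K i"
  by (simp add: ch_def)

lemma ch_minus[simp]: "f \<in> ch K i \<Longrightarrow> - f \<in> ch K i"
  by (simp add: ch_def)

lemma ch_diff[simp]: "f \<in> ch K i \<Longrightarrow> g \<in> ch K i \<Longrightarrow> f - g \<in> ch K i"
  by (simp add: ch_def)

lemma ch_scale[simp]: "f \<in> ch K i \<Longrightarrow> kscale a f \<in> ch K i"
  by (simp add: ch_def kscale_def)

lemma ch_subspace: "kv.subspace (ch K i)"
  by (simp add: kv.subspace_def)

lemma chD: "f \<in> ch K i \<Longrightarrow> x \<notin> K i \<Longrightarrow> f x = 0"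
  by (simp add: ch_def)

lemma ch_mono: "f \<in> ch A i \<Longrightarrow> A i \<subseteq> B i \<Longrightarrow> f \<in> ch B i"
  by (auto simp: ch_def)

lemma ch_empty: "K i = {} \<Longrightarrow> ch K i = {0}"
  by (auto simp: ch_def fun_eq_iff)

lemma ch_span: assumes "finite (K i)" shows "ch K i \<subseteq> kv.span (ev ` K i)"
proof
  fix f :: "'a \<Rightarrow> 'b" assume f: "f \<in> ch K i"
  have "f = (\<Sum>x\<in>K i. kscale (f x) (ev x))"
  proof
    fix y
    have "(\<Sum>x\<in>K i. kscale (f x) (ev x)) y = (\<Sum>x\<in>K i. if y = x then f x else 0)"
      by (auto simp: sum_fun_apply kscale_def ev_def intro!: sum.cong)
    also have "\<dots> = f y" using f assms by (simp add: ch_def)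
    finally show "f y = (\<Sum>x\<in>K i. kscale (f x) (ev x)) y" by simp
  qed
  also have "\<dots> \<in> kv.span (ev ` K i)"
    by (intro kv.span_sum kv.span_scale kv.span_base) auto
  finally show "f \<in> kv.span (ev ` K i)" .
qed

lemma rst_ch: "rst (A i) f \<in> ch A i" by (simp add: rst_def ch_def)

lemma bd_ch: "bd K c (Suc i) f \<in> ch K i" by (simp add: bd_def ch_def)

lemma bd_add: "bd K c i (f + g) = bd K c i f + bd K c i g"
  by (auto simp: bd_def fun_eq_iff algebra_simps sum.distrib)

lemma bd_scale: "bd K c i (kscale a f) = kscale a (bd K c i f)"
  by (auto simp: bd_def fun_eq_iff kscale_def sum_distrib_left algebra_simps)

lemma bd_scale': "bd K c i (\<lambda>x. a * f x) = (\<lambda>y. a * bd K c i f y)"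
  using bd_scale[of K c i a f] by (simp add: kscale_def)

lemma bd_lin: "module_hom kscale kscale (bd K c i)"
  unfolding module_hom_iff using kv.module_axioms bd_add bd_scale by blast

lemma bd_zero[simp]: "bd K c i 0 = 0"
  by (simp add: bd_def fun_eq_iff)

lemma bd_minus: "bd K c i (- f) = - bd K c i f"
  by (auto simp: bd_def fun_eq_iff sum_negf)

lemma bd_diff: "bd K c i (f - g) = bd K c i f - bd K c i g"
  by (auto simp: bd_def fun_eq_iff algebra_simps sum_subtractf)

lemma bd_restrict:
  assumes cl: "closedc P K c" and fK: "finite (K (Suc i))" and f: "f \<in> ch P (Suc i)"
  shows "bd K c (Suc i) f = bd P c (Suc i) f"
proof
  fix y
  have PK: "P (Suc i) \<subseteq> K (Suc i)" "P i \<subseteq> K i" using cl by (auto simp: closedc_def)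
  have s: "(\<Sum>x\<in>K (Suc i). f x * c x y) = (\<Sum>x\<in>P (Suc i). f x * c x y)"
    using f PK fK by (intro sum.mono_neutral_right) (auto simp: ch_def)
  show "bd K c (Suc i) f y = bd P c (Suc i) f y"
  proof (cases "y \<in> P i")
    case True
    then show ?thesis using PK s by (auto simp: bd_def)
  next
    case False
    show ?thesis
    proof (cases "y \<in> K i")
      case True
      have "(\<Sum>x\<in>P (Suc i). f x * c x y) = 0"
      proof (intro sum.neutral ballI)
        fix x assume "x \<in> P (Suc i)"
        then show "f x * c x y = 0" using False True cl
          by (auto simp: closedc_def)
      qed
      then show ?thesis using False s by (auto simp: bd_def)
    next
      case False2: False
      then show ?thesis using False by (auto simp: bd_def)
    qed
  qed
qed

lemma closedc_ch:
  assumes cl: "closedc P K c" and fK: "finite (K (Suc i))" and f: "f \<in> ch P (Suc i)"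
  shows "bd K c (Suc i) f \<in> ch P i"
  using bd_restrict[OF assms] bd_ch by metis

lemma dsq_closed:
  assumes cl: "closedc P K c" and fK: "fin K" and d: "dsq K c"
  shows "dsq P c"
  unfolding dsq_def
proof (intro allI impI)
  fix i and f :: "'a \<Rightarrow> 'b" assume f: "f \<in> ch P (Suc (Suc i))"
  have fK2: "finite (K (Suc (Suc i)))" "finite (K (Suc i))" using fK by (auto simp: fin_def)
  have "bd P c (Suc (Suc i)) f = bd K c (Suc (Suc i)) f" using bd_restrict[OF cl fK2(1) f] by simp
  moreover have "bd K c (Suc (Suc i)) f \<in> ch P (Suc i)" using closedc_ch[OF cl fK2(1) f] .
  moreover have "f \<in> ch K (Suc (Suc i))" using f cl by (auto simp: closedc_def ch_def)
  ultimately show "bd P c (Suc i) (bd P c (Suc (Suc i)) f) = 0"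
    using bd_restrict[OF cl fK2(2), of "bd K c (Suc (Suc i)) f"] d by (auto simp: dsq_def)
qed

lemma bnd_sub_cyc:
  assumes "dsq K c" shows "bnd K c i \<subseteq> cyc K c i"
proof
  fix g assume "g \<in> bnd K c i"
  then obtain f where f: "f \<in> ch K (Suc i)" "g = bd K c (Suc i) f" by (auto simp: bnd_def)
  show "g \<in> cyc K c i"
  proof (cases i)
    case 0 then show ?thesis using f bd_ch by (auto simp: cyc_def)
  next
    case (Suc j) then show ?thesis using f bd_ch assms by (auto simp: cyc_def dsq_def)
  qed
qed

lemma cyc_ch: "cyc K c i \<subseteq> ch K i" by (auto simp: cyc_def)

lemma bnd_ch: "bnd K c i \<subseteq> ch K i" using bd_ch by (auto simp: bnd_def)

lemma cyc_subspace: "kv.subspace (cyc K c i)"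
  by (auto simp: cyc_def kv.subspace_def ch_subspace bd_add bd_scale' ch_def kscale_def)

lemma bnd_subspace: "kv.subspace (bnd K c i)"
proof -
  interpret m: module_hom kscale kscale "bd K c (Suc i)" by (rule bd_lin)
  show ?thesis unfolding bnd_def by (rule m.subspace_image[OF ch_subspace])
qed

lemma dim_le_subzero:
  assumes "S \<subseteq> {0::'b \<Rightarrow> 'k::field}" shows "kv.dim S = 0"
proof -
  have "S = {} \<or> S = {0}" using assms by blast
  then show ?thesis
    using kv.dim_zero_space kv.dim_eq_card_independent[OF kv.independent_empty] by auto
qed

lemma hom_empty: assumes "K i = {}" shows "hom K c i = 0"
proof -
  have "cyc K c i \<subseteq> {0}" using cyc_ch[of K c i] ch_empty[of K i, OF assms] by blast
  then show ?thesis by (simp add: hom_def dim_le_subzero)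
qed


lemma disj_sum_zero:
  assumes "p \<in> ch A j" "q \<in> ch B j" "A j \<inter> B j = {}" "p + q = 0"
  shows "p = 0" "q = 0"
proof -
  have s: "\<And>y. p y + q y = 0" using assms(4) by (metis plus_fun_apply zero_fun_def)
  have pq: "p y = 0 \<and> q y = 0" for y
  proof (cases "y \<in> A j")
    case True
    then have "q y = 0" using assms(2,3) by (auto simp: ch_def)
    then show ?thesis using s[of y] by simp
  next
    case False
    then have "p y = 0" using assms(1) by (auto simp: ch_def)
    then show ?thesis using s[of y] by simp
  qed
  then show "p = 0" "q = 0" by (auto simp: fun_eq_iff)
qed

lemma ch_disj_zero:
  assumes "p \<in> ch A j" "p \<in> ch B j" "A j \<inter> B j = {}"
  shows "p = 0"
proof
  fix x show "p x = 0 x"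
  proof (cases "x \<in> A j")
    case True then have "x \<notin> B j" using assms(3) by blast
    then show ?thesis using assms(2) by (simp add: ch_def)
  next
    case False then show ?thesis using assms(1) by (simp add: ch_def)
  qed
qed

lemma rst_split:
  assumes "f \<in> ch K i" "K i = A \<union> B" "A \<inter> B = {}"
  shows "f = rst A f + rst B f"
  using assms by (auto simp: rst_def fun_eq_iff ch_def)

lemma ch_span_sub:
  assumes "finite (K i)" "S \<subseteq> ch K i" shows "S \<subseteq> kv.span (ev ` K i)"
  using assms ch_span by blast

lemma closedc_sub: "closedc P K c \<Longrightarrow> P i \<subseteq> K i" by (auto simp: closedc_def)

lemma hom_dirsum:
  assumes fK: "fin K" and part: "\<And>i. K i = A i \<union> B i" and disj: "\<And>i. A i \<inter> B i = {}"
    and clA: "closedc A K c" and clB: "closedc B K c" and d: "dsq K c"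
  shows "hom K c i = hom A c i + hom B c i"
proof -
  have fKi: "\<And>i. finite (K i)" using fK by (simp add: fin_def)
  have chA: "\<And>f i. f \<in> ch A i \<Longrightarrow> f \<in> ch K i" using part by (auto simp: ch_def)
  have chB: "\<And>f i. f \<in> ch B i \<Longrightarrow> f \<in> ch K i" using part by (auto simp: ch_def)
  have dA: "dsq A c" using dsq_closed[OF clA fK d] .
  have dB: "dsq B c" using dsq_closed[OF clB fK d] .
  have cyc_eq: "cyc K c i = ssum (cyc A c i) (cyc B c i)"
  proof
    show "cyc K c i \<subseteq> ssum (cyc A c i) (cyc B c i)"
    proof
      fix f assume f: "f \<in> cyc K c i"
      then have fch: "f \<in> ch K i" using cyc_ch by blast
      define a where "a = rst (A i) f"
      define b where "b = rst (B i) f"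
      have fab: "f = a + b" using rst_split[OF fch part[of i] disj[of i]] a_def b_def by simp
      have a: "a \<in> ch A i" "b \<in> ch B i" using rst_ch a_def b_def by auto
      show "f \<in> ssum (cyc A c i) (cyc B c i)"
      proof (cases i)
        case 0 then show ?thesis using fab a by (auto simp: ssum_def cyc_def)
      next
        case (Suc j)
        have "bd K c i f = 0" using f Suc by (simp add: cyc_def)
        then have "bd K c i a + bd K c i b = 0" using fab bd_add by metis
        moreover have "bd K c i a = bd A c i a" "bd K c i b = bd B c i b"
        proof -
          have a': "a \<in> ch A (Suc j)" "b \<in> ch B (Suc j)" using a Suc by auto
          show "bd K c i a = bd A c i a" "bd K c i b = bd B c i b"
            using bd_restrict[OF clA fKi a'(1)] bd_restrict[OF clB fKi a'(2)] Suc by auto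
        qed
        moreover have "bd A c i a \<in> ch A j" "bd B c i b \<in> ch B j" using bd_ch Suc by auto
        ultimately have "bd A c i a = 0" "bd B c i b = 0" using disj_sum_zero[where A=A and B=B and j=j, OF _ _ disj[of j]] by metis+
        then show ?thesis using fab a Suc by (auto simp: ssum_def cyc_def)
      qed
    qed
  next
    show "ssum (cyc A c i) (cyc B c i) \<subseteq> cyc K c i"
    proof
      fix f assume "f \<in> ssum (cyc A c i) (cyc B c i)"
      then obtain a b where ab: "f = a + b" "a \<in> cyc A c i" "b \<in> cyc B c i" by (auto simp: ssum_def)
      have a: "a \<in> ch A i" "b \<in> ch B i" using ab cyc_ch by blast+
      show "f \<in> cyc K c i"
      proof (cases i)
        case 0 then show ?thesis using ab a chA[of a 0] chB[of b 0] by (auto simp: cyc_def)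
      next
        case (Suc j)
        have "bd K c i a = bd A c i a" "bd K c i b = bd B c i b"
        proof -
          have a': "a \<in> ch A (Suc j)" "b \<in> ch B (Suc j)" using a Suc by auto
          show "bd K c i a = bd A c i a" "bd K c i b = bd B c i b"
            using bd_restrict[OF clA fKi a'(1)] bd_restrict[OF clB fKi a'(2)] Suc by auto
        qed
        moreover have "a + b \<in> ch K i" using chA[of a i] chB[of b i] a by simp
        ultimately show ?thesis using ab Suc by (auto simp: cyc_def bd_add)
      qed
    qed
  qed
  have bnd_eq: "bnd K c i = ssum (bnd A c i) (bnd B c i)"
  proof
    show "bnd K c i \<subseteq> ssum (bnd A c i) (bnd B c i)"
    proof
      fix g assume "g \<in> bnd K c i"
      then obtain f where f: "f \<in> ch K (Suc i)" "g = bd K c (Suc i) f" by (auto simp: bnd_def)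
      define a where "a = rst (A (Suc i)) f"
      define b where "b = rst (B (Suc i)) f"
      have fab: "f = a + b" using rst_split[OF f(1) part[of "Suc i"] disj[of "Suc i"]] a_def b_def by simp
      have a: "a \<in> ch A (Suc i)" "b \<in> ch B (Suc i)" using rst_ch a_def b_def by auto
      have "g = bd A c (Suc i) a + bd B c (Suc i) b"
        using f fab bd_add bd_restrict[OF clA fKi a(1)] bd_restrict[OF clB fKi a(2)] by metis
      then show "g \<in> ssum (bnd A c i) (bnd B c i)" using a by (auto simp: ssum_def bnd_def)
    qed
  next
    show "ssum (bnd A c i) (bnd B c i) \<subseteq> bnd K c i"
    proof
      fix g assume "g \<in> ssum (bnd A c i) (bnd B c i)"
      then obtain a b where ab: "g = bd A c (Suc i) a + bd B c (Suc i) b" "a \<in> ch A (Suc i)" "b \<in> ch B (Suc i)"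
        by (auto simp: ssum_def bnd_def)
      then have "g = bd K c (Suc i) (a + b)"
        using bd_add bd_restrict[OF clA fKi ab(2)] bd_restrict[OF clB fKi ab(3)] by metis
      moreover have "a + b \<in> ch K (Suc i)" using ab chA[of a "Suc i"] chB[of b "Suc i"] by simp
      ultimately show "g \<in> bnd K c i" by (auto simp: bnd_def)
    qed
  qed
  have int0: "ch A i \<inter> ch B i \<subseteq> {0}"
  proof
    fix f assume f: "f \<in> ch A i \<inter> ch B i"
    have "f x = 0" for x
    proof (cases "x \<in> A i")
      case True then have "x \<notin> B i" using disj[of i] by blast
      then show ?thesis using f by (simp add: ch_def)
    next
      case False then show ?thesis using f by (simp add: ch_def)
    qed
    then show "f \<in> {0}" by (simp add: fun_eq_iff)
  qed
  have chAK: "ch A i \<subseteq> ch K i" using chA by blast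
  have chBK: "ch B i \<subseteq> ch K i" using chB by blast
  have fE: "finite (ev ` K i :: ('a \<Rightarrow> 'b) set)" using fKi by simp
  have spA: "\<And>S. S \<subseteq> ch A i \<Longrightarrow> S \<subseteq> kv.span (ev ` K i)"
    by (rule ch_span_sub[OF fKi]) (use chAK in blast)
  have spB: "\<And>S. S \<subseteq> ch B i \<Longrightarrow> S \<subseteq> kv.span (ev ` K i)"
    by (rule ch_span_sub[OF fKi]) (use chBK in blast)
  have i1: "cyc A c i \<inter> cyc B c i = {0}"
    using int0 cyc_ch[of A c i] cyc_ch[of B c i] kv.subspace_0[OF cyc_subspace[of A c i]]
      kv.subspace_0[OF cyc_subspace[of B c i]] by blast
  have i2: "bnd A c i \<inter> bnd B c i = {0}"
    using int0 bnd_ch[of A c i] bnd_ch[of B c i] kv.subspace_0[OF bnd_subspace[of A c i]]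
      kv.subspace_0[OF bnd_subspace[of B c i]] by blast
  have "kv.dim (cyc K c i) = kv.dim (cyc A c i) + kv.dim (cyc B c i)"
    unfolding cyc_eq ssum_def
    by (rule kv.dim_direct[OF cyc_subspace cyc_subspace i1 spA[OF cyc_ch] spB[OF cyc_ch] fE])
  moreover have "kv.dim (bnd K c i) = kv.dim (bnd A c i) + kv.dim (bnd B c i)"
    unfolding bnd_eq ssum_def
    by (rule kv.dim_direct[OF bnd_subspace bnd_subspace i2 spA[OF bnd_ch] spB[OF bnd_ch] fE])
  moreover have "kv.dim (bnd A c i) \<le> kv.dim (cyc A c i)"
    using kv.dim_mono_fin[OF bnd_sub_cyc[OF dA] spA[OF cyc_ch] fE] .
  moreover have "kv.dim (bnd B c i) \<le> kv.dim (cyc B c i)"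
    using kv.dim_mono_fin[OF bnd_sub_cyc[OF dB] spB[OF cyc_ch] fE] .
  ultimately show ?thesis by (simp add: hom_def)
qed


lemma hom_elim:
  fixes K :: "nat \<Rightarrow> 'a set" and c :: "'a \<Rightarrow> 'a \<Rightarrow> 'k::field"
  assumes fK: "fin K"
    and part: "\<And>i. K i = P1 i \<union> P2 i \<union> P3 i"
    and d12: "\<And>i. P1 i \<inter> P2 i = {}" and d13: "\<And>i. P1 i \<inter> P3 i = {}" and d23: "\<And>i. P2 i \<inter> P3 i = {}"
    and P10: "P1 0 = {}"
    and cl3: "closedc P3 K c"
    and gbij: "\<And>i. bij_betw g (P1 (Suc i)) (P2 i)"
    and gnz: "\<And>i x. x \<in> P1 (Suc i) \<Longrightarrow> c x (g x) \<noteq> 0"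
    and gz: "\<And>i x y. x \<in> P1 (Suc i) \<Longrightarrow> y \<in> P2 i \<Longrightarrow> y \<noteq> g x \<Longrightarrow> c x y = 0"
    and d: "dsq K c"
  shows "hom K c i = hom P3 c i"
proof -
  have fKi: "\<And>i. finite (K i)" using fK by (simp add: fin_def)
  define D where "D = bd K c"
  have chK1: "f \<in> ch K j" if "f \<in> ch P1 j" for f :: "'a \<Rightarrow> 'k" and j
    using that part[of j] by (auto simp: ch_def)
  have chK3: "f \<in> ch K j" if "f \<in> ch P3 j" for f :: "'a \<Rightarrow> 'k" and j
    using that part[of j] by (auto simp: ch_def)
  have dsqK: "D (Suc j) (D (Suc (Suc j)) f) = 0" if "f \<in> ch K (Suc (Suc j))" for f j
    using d that by (simp add: dsq_def D_def)
  have DP3: "D (Suc j) r = bd P3 c (Suc j) r" if "r \<in> ch P3 (Suc j)" for r j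
    unfolding D_def by (rule bd_restrict[OF cl3 fKi that])
  have DP3ch: "D (Suc j) r \<in> ch P3 j" if "r \<in> ch P3 (Suc j)" for r j
    unfolding D_def by (rule closedc_ch[OF cl3 fKi that])
  have Dch: "D (Suc j) f \<in> ch K j" for f j unfolding D_def by (rule bd_ch)
  have factA: "D (Suc j) q (g x) = q x * c x (g x)" if q: "q \<in> ch P1 (Suc j)" and x: "x \<in> P1 (Suc j)" for j q x
  proof -
    have gx: "g x \<in> P2 j" using gbij[of j] x by (auto simp: bij_betw_def)
    then have gxK: "g x \<in> K j" using part[of j] by blast
    have xK: "x \<in> K (Suc j)" using x part[of "Suc j"] by blast
    have "D (Suc j) q (g x) = (\<Sum>x'\<in>K (Suc j). q x' * c x' (g x))" using gxK by (simp add: D_def bd_def)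
    also have "\<dots> = q x * c x (g x) + (\<Sum>x'\<in>K (Suc j) - {x}. q x' * c x' (g x))"
      by (rule sum.remove[OF fKi xK])
    also have "(\<Sum>x'\<in>K (Suc j) - {x}. q x' * c x' (g x)) = 0"
    proof (intro sum.neutral ballI)
      fix x' assume x': "x' \<in> K (Suc j) - {x}"
      show "q x' * c x' (g x) = 0"
      proof (cases "x' \<in> P1 (Suc j)")
        case True
        have "g x' \<noteq> g x" using True x x' gbij[of j] by (auto simp: bij_betw_def inj_on_def)
        then have "c x' (g x) = 0" using gz[OF True gx] by metis
        then show ?thesis by simp
      next
        case False then show ?thesis using q by (simp add: ch_def)
      qed
    qed
    finally show ?thesis by simp
  qed
  have factA': "q = 0" if q: "q \<in> ch P1 (Suc j)" and z: "\<And>y. y \<in> P2 j \<Longrightarrow> D (Suc j) q y = 0" for q j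
  proof
    fix x show "q x = 0 x"
    proof (cases "x \<in> P1 (Suc j)")
      case True
      have gx: "g x \<in> P2 j" using gbij[of j] True by (auto simp: bij_betw_def)
      have "q x * c x (g x) = 0" using factA[OF q True] z[OF gx] by simp
      then show ?thesis using gnz[OF True] by simp
    next
      case False then show ?thesis using q by (simp add: ch_def)
    qed
  qed
  have factB: "\<exists>r p q. r \<in> ch P3 j \<and> p \<in> ch P1 j \<and> q \<in> ch P1 (Suc j) \<and> f = r + p + D (Suc j) q"
    if f: "f \<in> ch K j" for f j
  proof -
    define q where "q = (\<lambda>x. if x \<in> P1 (Suc j) then f (g x) / c x (g x) else 0)"
    have q: "q \<in> ch P1 (Suc j)" by (simp add: q_def ch_def)
    define h where "h = f - D (Suc j) q"
    have h: "h \<in> ch K j" using f Dch h_def by simp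
    have h2: "h y = 0" if y: "y \<in> P2 j" for y
    proof -
      obtain x where x: "x \<in> P1 (Suc j)" "y = g x" using gbij[of j] y by (auto simp: bij_betw_def)
      have "h y = f (g x) - q x * c x (g x)" using factA[OF q x(1)] x(2) by (simp add: h_def)
      also have "\<dots> = 0" using gnz[OF x(1)] x(1) by (simp add: q_def)
      finally show ?thesis .
    qed
    define r where "r = rst (P3 j) h"
    define p where "p = rst (P1 j) h"
    have hpr: "h = r + p"
    proof
      fix y show "h y = (r + p) y"
      proof (cases "y \<in> K j")
        case True
        then consider "y \<in> P1 j" | "y \<in> P2 j" | "y \<in> P3 j" using part[of j] by blast
        then show ?thesis
        proof cases
          case 1 then have "y \<notin> P3 j" using d13[of j] by blast
          then show ?thesis using 1 by (simp add: r_def p_def rst_def)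
        next
          case 2 then have "y \<notin> P3 j" "y \<notin> P1 j" using d23[of j] d12[of j] by blast+
          then show ?thesis using 2 h2 by (simp add: r_def p_def rst_def)
        next
          case 3 then have "y \<notin> P1 j" using d13[of j] by blast
          then show ?thesis using 3 by (simp add: r_def p_def rst_def)
        qed
      next
        case False
        then have "y \<notin> P1 j" "y \<notin> P3 j" using part[of j] by blast+
        then show ?thesis using False h by (simp add: r_def p_def rst_def ch_def)
      qed
    qed
    have "f = r + p + D (Suc j) q" using hpr h_def by (simp add: algebra_simps)
    moreover have "r \<in> ch P3 j" "p \<in> ch P1 j" using r_def p_def rst_ch by auto
    ultimately show ?thesis using q by blast
  qed
  have factC: "p = 0 \<and> q = 0"
    if p: "p \<in> ch P1 j" and q: "q \<in> ch P1 (Suc j)" and z: "p + D (Suc j) q \<in> ch P3 j" for p q j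
  proof -
    have "D (Suc j) q y = 0" if y: "y \<in> P2 j" for y
    proof -
      have "y \<notin> P3 j" "y \<notin> P1 j" using y d23[of j] d12[of j] by blast+
      then have "(p + D (Suc j) q) y = 0" "p y = 0" using z p by (auto simp: ch_def)
      then show ?thesis by simp
    qed
    then have q0: "q = 0" by (rule factA'[OF q])
    then have "p \<in> ch P3 j" using z by (simp add: D_def)
    then have "p = 0" using ch_disj_zero[where A=P1 and B=P3 and j=j, OF p _ d13[of j]] by blast
    then show ?thesis using q0 by simp
  qed
  define BQ where "BQ j = D (Suc j) ` ch P1 (Suc j)" for j
  have BQ_sub: "BQ j \<subseteq> ch K j" for j using Dch by (auto simp: BQ_def)
  have BQ_subspace: "kv.subspace (BQ j)" for j
  proof -
    interpret m: module_hom kscale kscale "D (Suc j)" unfolding D_def by (rule bd_lin)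
    show ?thesis unfolding BQ_def by (rule m.subspace_image[OF ch_subspace])
  qed
  have cyc_eq: "cyc K c i = ssum (cyc P3 c i) (BQ i)"
  proof
    show "cyc K c i \<subseteq> ssum (cyc P3 c i) (BQ i)"
    proof
      fix f assume f: "f \<in> cyc K c i"
      then have fch: "f \<in> ch K i" using cyc_ch by blast
      obtain r p q where rpq: "r \<in> ch P3 i" "p \<in> ch P1 i" "q \<in> ch P1 (Suc i)" "f = r + p + D (Suc i) q"
        using factB[OF fch] by blast
      show "f \<in> ssum (cyc P3 c i) (BQ i)"
      proof (cases i)
        case 0
        then have "p = 0" using rpq(2) P10 by (simp add: ch_def fun_eq_iff)
        then show ?thesis using rpq 0 by (auto simp: ssum_def cyc_def BQ_def)
      next
        case (Suc j)
        have r: "r \<in> ch P3 (Suc j)" and p: "p \<in> ch P1 (Suc j)" and q: "q \<in> ch P1 (Suc (Suc j))"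
          using rpq Suc by auto
        have "D i f = 0" using f Suc by (simp add: cyc_def D_def)
        moreover have "D i f = D i r + D i p + D i (D (Suc i) q)" using rpq(4) by (simp add: D_def bd_add)
        moreover have "D i (D (Suc i) q) = 0" using dsqK[OF chK1[OF q]] Suc by simp
        ultimately have e: "D i r + D i p = 0" by simp
        then have "D i r = D (Suc j) (- p)" using Suc by (simp add: D_def bd_minus eq_neg_iff_add_eq_0)
        then have "0 + D (Suc j) (- p) \<in> ch P3 j" using DP3ch[OF r] Suc by simp
        then have "- p = 0" using factC[of 0 j "- p"] p by simp
        then have p0: "p = 0" by simp
        then have "D i r = 0" using e by (simp add: D_def)
        then have "bd P3 c i r = 0" using DP3[OF r] Suc by simp
        then have "r \<in> cyc P3 c i" using rpq(1) Suc by (simp add: cyc_def)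
        then show ?thesis using rpq p0 by (auto simp: ssum_def BQ_def)
      qed
    qed
  next
    show "ssum (cyc P3 c i) (BQ i) \<subseteq> cyc K c i"
    proof
      fix f assume "f \<in> ssum (cyc P3 c i) (BQ i)"
      then obtain r q where rq: "f = r + D (Suc i) q" "r \<in> cyc P3 c i" "q \<in> ch P1 (Suc i)"
        by (auto simp: ssum_def BQ_def)
      have rch: "r \<in> ch P3 i" using rq(2) cyc_ch by blast
      have fch: "f \<in> ch K i" using rq(1) chK3[OF rch] Dch by simp
      show "f \<in> cyc K c i"
      proof (cases i)
        case 0 then show ?thesis using fch by (simp add: cyc_def)
      next
        case (Suc j)
        have r: "r \<in> ch P3 (Suc j)" and q: "q \<in> ch P1 (Suc (Suc j))" using rch rq(3) Suc by auto
        have "D i f = D i r + D i (D (Suc i) q)" using rq(1) by (simp add: D_def bd_add)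
        also have "D i (D (Suc i) q) = 0" using dsqK[OF chK1[OF q]] Suc by simp
        also have "D i r = 0" using DP3[OF r] rq(2) Suc by (simp add: cyc_def)
        finally have "D i f = 0" by (simp add: zero_fun_def)
        then show ?thesis using fch Suc by (simp add: cyc_def D_def)
      qed
    qed
  qed
  have bnd_eq: "bnd K c i = ssum (bnd P3 c i) (BQ i)"
  proof
    show "bnd K c i \<subseteq> ssum (bnd P3 c i) (BQ i)"
    proof
      fix z assume "z \<in> bnd K c i"
      then obtain f where f: "f \<in> ch K (Suc i)" "z = D (Suc i) f" by (auto simp: bnd_def D_def)
      obtain r p q where rpq: "r \<in> ch P3 (Suc i)" "p \<in> ch P1 (Suc i)" "q \<in> ch P1 (Suc (Suc i))"
        "f = r + p + D (Suc (Suc i)) q"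
        using factB[OF f(1)] by blast
      have "z = D (Suc i) r + D (Suc i) p + D (Suc i) (D (Suc (Suc i)) q)" using f(2) rpq(4) by (simp add: D_def bd_add)
      also have "D (Suc i) (D (Suc (Suc i)) q) = 0" using dsqK[OF chK1[OF rpq(3)]] .
      also have "D (Suc i) r = bd P3 c (Suc i) r" using DP3[OF rpq(1)] .
      finally have "z = bd P3 c (Suc i) r + D (Suc i) p" by (simp add: plus_fun_def)
      then show "z \<in> ssum (bnd P3 c i) (BQ i)" using rpq by (auto simp: ssum_def bnd_def BQ_def)
    qed
  next
    show "ssum (bnd P3 c i) (BQ i) \<subseteq> bnd K c i"
    proof
      fix z assume "z \<in> ssum (bnd P3 c i) (BQ i)"
      then obtain r p where rp: "z = bd P3 c (Suc i) r + D (Suc i) p" "r \<in> ch P3 (Suc i)" "p \<in> ch P1 (Suc i)"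
        by (auto simp: ssum_def bnd_def BQ_def)
      have "z = D (Suc i) (r + p)" using rp DP3[OF rp(2)] by (simp add: D_def bd_add)
      moreover have "r + p \<in> ch K (Suc i)" using chK3[OF rp(2)] chK1[OF rp(3)] by simp
      ultimately show "z \<in> bnd K c i" by (auto simp: bnd_def D_def)
    qed
  qed
  have int: "S \<inter> BQ i = {0}" if S: "S \<subseteq> ch P3 i" "kv.subspace S" for S
  proof
    show "S \<inter> BQ i \<subseteq> {0}"
    proof
      fix z assume z: "z \<in> S \<inter> BQ i"
      then obtain q where q: "q \<in> ch P1 (Suc i)" "z = D (Suc i) q" by (auto simp: BQ_def)
      have "0 + D (Suc i) q \<in> ch P3 i" using z q S by auto
      then have "q = 0" using factC[of 0 i q] q by simp
      then show "z \<in> {0}" using q by (simp add: D_def)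
    qed
  next
    show "{0} \<subseteq> S \<inter> BQ i" using kv.subspace_0[OF S(2)] kv.subspace_0[OF BQ_subspace] by blast
  qed
  have fE: "finite (ev ` K i :: ('a \<Rightarrow> 'k) set)" using fKi by simp
  have sp: "S \<subseteq> kv.span (ev ` K i)" if "S \<subseteq> ch K i" for S :: "('a \<Rightarrow> 'k) set"
    by (rule ch_span_sub[OF fKi that])
  have ch3K: "ch P3 i \<subseteq> (ch K i :: ('a \<Rightarrow> 'k) set)" using chK3 by blast
  have "kv.dim (cyc K c i) = kv.dim (cyc P3 c i) + kv.dim (BQ i)"
    unfolding cyc_eq ssum_def
    by (rule kv.dim_direct[OF cyc_subspace BQ_subspace int[OF cyc_ch cyc_subspace]
          sp[OF order.trans[OF cyc_ch ch3K]] sp[OF BQ_sub] fE])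
  moreover have "kv.dim (bnd K c i) = kv.dim (bnd P3 c i) + kv.dim (BQ i)"
    unfolding bnd_eq ssum_def
    by (rule kv.dim_direct[OF bnd_subspace BQ_subspace int[OF bnd_ch bnd_subspace]
          sp[OF order.trans[OF bnd_ch ch3K]] sp[OF BQ_sub] fE])
  ultimately show ?thesis by (simp add: hom_def)
qed


lemma hom_iso:
  fixes K K' :: "nat \<Rightarrow> 'a set" and c c' :: "'a \<Rightarrow> 'a \<Rightarrow> 'k::field" and \<phi> :: "'a \<Rightarrow> 'a"
    and \<epsilon> :: "'a \<Rightarrow> 'k"
  assumes fK: "fin K" and fK': "fin K'"
    and bij: "\<And>i. bij_betw \<phi> (K i) (K' i)"
    and eps: "\<And>x. \<epsilon> x * \<epsilon> x = 1"
    and cc: "\<And>i x y. x \<in> K (Suc i) \<Longrightarrow> y \<in> K i \<Longrightarrow> c' (\<phi> x) (\<phi> y) = \<epsilon> x * \<epsilon> y * c x y"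
  shows "hom K c i = hom K' c' i"
proof -
  have fKi: "\<And>i. finite (K i)" using fK by (simp add: fin_def)
  define \<psi> where "\<psi> j = the_inv_into (K j) \<phi>" for j
  have inj: "inj_on \<phi> (K j)" for j using bij[of j] by (simp add: bij_betw_def)
  have img: "\<phi> ` K j = K' j" for j using bij[of j] by (simp add: bij_betw_def)
  have psi1: "\<psi> j (\<phi> x) = x" if "x \<in> K j" for x j
    unfolding \<psi>_def using the_inv_into_f_f[OF inj[of j] that] .
  have psi2: "\<psi> j z \<in> K j" "\<phi> (\<psi> j z) = z" if "z \<in> K' j" for z j
    unfolding \<psi>_def using the_inv_into_into[OF inj[of j], of z "K j"] f_the_inv_into_f[OF inj[of j], of z] that img[of j]
    by auto
  have phiK: "\<phi> x \<in> K' j" if "x \<in> K j" for x j using img[of j] that by blast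
  have epsnz: "\<epsilon> x \<noteq> 0" for x using eps[of x] by auto
  define \<Phi> where "\<Phi> j f = (\<lambda>z. if z \<in> K' j then \<epsilon> (\<psi> j z) * f (\<psi> j z) else 0)" for j and f :: "'a \<Rightarrow> 'k"
  have \<Phi>lin: "module_hom kscale kscale (\<Phi> j)" for j
    unfolding module_hom_iff using kv.module_axioms
    by (auto simp: \<Phi>_def fun_eq_iff kscale_def algebra_simps)
  have \<Phi>0: "\<Phi> j 0 = 0" for j by (simp add: \<Phi>_def fun_eq_iff)
  have \<Phi>ch: "\<Phi> j f \<in> ch K' j" for j f by (simp add: \<Phi>_def ch_def)
  have \<Phi>inj: "inj_on (\<Phi> j) (ch K j)" for j
  proof (rule inj_onI)
    fix f g assume f: "f \<in> ch K j" and g: "g \<in> ch K j" and e: "\<Phi> j f = \<Phi> j g"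
    show "f = g"
    proof
      fix x show "f x = g x"
      proof (cases "x \<in> K j")
        case True
        have "\<Phi> j f (\<phi> x) = \<Phi> j g (\<phi> x)" using e by simp
        then have "\<epsilon> x * f x = \<epsilon> x * g x" using True phiK psi1 by (simp add: \<Phi>_def)
        then show ?thesis using epsnz[of x] by simp
      next
        case False then show ?thesis using f g by (simp add: ch_def)
      qed
    qed
  qed
  have \<Phi>surj: "\<Phi> j ` ch K j = ch K' j" for j
  proof
    show "\<Phi> j ` ch K j \<subseteq> ch K' j" using \<Phi>ch by blast
  next
    show "ch K' j \<subseteq> \<Phi> j ` ch K j"
    proof
      fix h :: "'a \<Rightarrow> 'k" assume h: "h \<in> ch K' j"
      define f where "f = (\<lambda>x. if x \<in> K j then \<epsilon> x * h (\<phi> x) else 0)"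
      have "f \<in> ch K j" by (simp add: f_def ch_def)
      moreover have "\<Phi> j f = h"
      proof
        fix z show "\<Phi> j f z = h z"
        proof (cases "z \<in> K' j")
          case True
          then have "\<Phi> j f z = \<epsilon> (\<psi> j z) * (\<epsilon> (\<psi> j z) * h z)"
            using psi2[OF True] by (simp add: \<Phi>_def f_def)
          also have "\<dots> = h z" using eps[of "\<psi> j z"] by (simp add: mult.assoc[symmetric])
          finally show ?thesis .
        next
          case False then show ?thesis using h by (simp add: \<Phi>_def ch_def)
        qed
      qed
      ultimately show "h \<in> \<Phi> j ` ch K j" by blast
    qed
  qed
  have \<Phi>comm: "bd K' c' (Suc j) (\<Phi> (Suc j) f) = \<Phi> j (bd K c (Suc j) f)" for j f
  proof
    fix z
    show "bd K' c' (Suc j) (\<Phi> (Suc j) f) z = \<Phi> j (bd K c (Suc j) f) z"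
    proof (cases "z \<in> K' j")
      case True
      define y where "y = \<psi> j z"
      have y: "y \<in> K j" "\<phi> y = z" using psi2[OF True] y_def by auto
      have "bd K' c' (Suc j) (\<Phi> (Suc j) f) z = (\<Sum>z'\<in>K' (Suc j). \<Phi> (Suc j) f z' * c' z' z)"
        using True by (simp add: bd_def)
      also have "\<dots> = (\<Sum>x\<in>K (Suc j). \<Phi> (Suc j) f (\<phi> x) * c' (\<phi> x) z)"
        using sum.reindex_bij_betw[OF bij[of "Suc j"], of "\<lambda>z'. \<Phi> (Suc j) f z' * c' z' z"] by simp
      also have "\<dots> = (\<Sum>x\<in>K (Suc j). \<epsilon> y * (f x * c x y))"
      proof (rule sum.cong[OF refl])
        fix x assume x: "x \<in> K (Suc j)"
        have "\<Phi> (Suc j) f (\<phi> x) * c' (\<phi> x) z = (\<epsilon> x * f x) * (\<epsilon> x * \<epsilon> y * c x y)"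
          using x phiK[OF x] psi1[OF x] cc[OF x y(1)] y(2) by (simp add: \<Phi>_def)
        also have "\<dots> = (\<epsilon> x * \<epsilon> x) * \<epsilon> y * (f x * c x y)" by (simp add: algebra_simps)
        finally show "\<Phi> (Suc j) f (\<phi> x) * c' (\<phi> x) z = \<epsilon> y * (f x * c x y)" using eps[of x] by simp
      qed
      also have "\<dots> = \<epsilon> y * (\<Sum>x\<in>K (Suc j). f x * c x y)" by (simp add: sum_distrib_left)
      also have "\<dots> = \<Phi> j (bd K c (Suc j) f) z"
        using True y y_def by (simp add: \<Phi>_def bd_def)
      finally show ?thesis .
    next
      case False then show ?thesis by (simp add: \<Phi>_def bd_def)
    qed
  qed
  have cyc_eq: "cyc K' c' i = \<Phi> i ` cyc K c i"
  proof (cases i)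
    case 0 then show ?thesis using \<Phi>surj[of 0] by (simp add: cyc_def)
  next
    case (Suc j)
    show ?thesis
    proof
      show "cyc K' c' i \<subseteq> \<Phi> i ` cyc K c i"
      proof
        fix h assume h: "h \<in> cyc K' c' i"
        then have hch: "h \<in> ch K' i" and hb: "bd K' c' i h = 0" using Suc by (auto simp: cyc_def)
        obtain f where f: "f \<in> ch K i" "h = \<Phi> i f" using hch \<Phi>surj[of i] by blast
        have "\<Phi> j (bd K c i f) = \<Phi> j 0" using hb f Suc \<Phi>comm[of j f] \<Phi>0 by simp
        then have "bd K c i f = 0" using \<Phi>inj[of j] bd_ch[of K c j f] Suc
          by (auto simp: inj_on_def)
        then show "h \<in> \<Phi> i ` cyc K c i" using f Suc by (auto simp: cyc_def)
      qed
    next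
      show "\<Phi> i ` cyc K c i \<subseteq> cyc K' c' i"
      proof
        fix h assume "h \<in> \<Phi> i ` cyc K c i"
        then obtain f where f: "f \<in> ch K i" "bd K c i f = 0" "h = \<Phi> i f" using Suc by (auto simp: cyc_def)
        have "bd K' c' i h = 0" using f Suc \<Phi>comm[of j f] \<Phi>0 by simp
        then show "h \<in> cyc K' c' i" using \<Phi>ch f Suc by (simp add: cyc_def)
      qed
    qed
  qed
  have bnd_eq: "bnd K' c' i = \<Phi> i ` bnd K c i"
  proof -
    have "bnd K' c' i = bd K' c' (Suc i) ` \<Phi> (Suc i) ` ch K (Suc i)"
      unfolding bnd_def \<Phi>surj ..
    also have "\<dots> = \<Phi> i ` bd K c (Suc i) ` ch K (Suc i)"
      unfolding image_image \<Phi>comm ..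
    finally show ?thesis unfolding bnd_def .
  qed
  have fE: "finite (ev ` K i :: ('a \<Rightarrow> 'k) set)" using fKi by simp
  have "kv.dim (cyc K' c' i) = kv.dim (cyc K c i)"
    unfolding cyc_eq
    by (rule kv.dim_inj_image[OF \<Phi>lin cyc_subspace inj_on_subset[OF \<Phi>inj cyc_ch]
          ch_span_sub[OF fKi cyc_ch] fE])
  moreover have "kv.dim (bnd K' c' i) = kv.dim (bnd K c i)"
    unfolding bnd_eq
    by (rule kv.dim_inj_image[OF \<Phi>lin bnd_subspace inj_on_subset[OF \<Phi>inj bnd_ch]
          ch_span_sub[OF fKi bnd_ch] fE])
  ultimately show ?thesis by (simp add: hom_def)
qed

definition shiftK :: "nat \<Rightarrow> (nat \<Rightarrow> 'a set) \<Rightarrow> nat \<Rightarrow> 'a set" where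
  "shiftK s K j = (if s \<le> j then K (j - s) else {})"

lemma shiftK_add[simp]: "shiftK s K (j + s) = K j" by (simp add: shiftK_def)

lemma fin_shiftK: "fin K \<Longrightarrow> fin (shiftK s K)" by (simp add: fin_def shiftK_def)

lemma hom_shift_low: "j < s \<Longrightarrow> hom (shiftK s K) c j = 0"
  by (rule hom_empty) (simp add: shiftK_def)

lemma hom_shift:
  fixes K :: "nat \<Rightarrow> 'a set" and c :: "'a \<Rightarrow> 'a \<Rightarrow> 'k::field"
  shows "hom (shiftK s K) c (j + s) = hom K c j"
proof -
  have chs: "ch (shiftK s K) (j' + s) = (ch K j' :: ('a \<Rightarrow> 'k) set)" for j' by (simp add: ch_def)
  have bds: "bd (shiftK s K) c (Suc j' + s) = bd K c (Suc j')" for j'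
    by (simp add: bd_def fun_eq_iff shiftK_def)
  have cyc_eq: "cyc (shiftK s K) c (j + s) = cyc K c j"
  proof (cases j)
    case 0
    show ?thesis
    proof (cases s)
      case 0 then show ?thesis using \<open>j = 0\<close> by (simp add: cyc_def ch_def shiftK_def)
    next
      case (Suc s')
      have "bd (shiftK s K) c s f = 0" for f by (simp add: bd_def shiftK_def Suc fun_eq_iff)
      then show ?thesis using \<open>j = 0\<close> Suc chs[of 0] by (simp add: cyc_def)
    qed
  next
    case (Suc j')
    then show ?thesis using chs[of j] bds[of j'] by (simp add: cyc_def)
  qed
  have bnd_eq: "bnd (shiftK s K) c (j + s) = bnd K c j"
    using chs[of "Suc j"] bds[of j] by (simp add: bnd_def)
  show ?thesis by (simp add: hom_def cyc_eq bnd_eq)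
qed

lemma closedc_mono:
  assumes "closedc P K c" "\<And>i. P i \<subseteq> K' i" "\<And>i. K' i \<subseteq> K i"
  shows "closedc P K' c"
  unfolding closedc_def
proof (intro conjI allI impI)
  fix i show "P i \<subseteq> K' i" using assms(2) .
next
  fix i x y assume "x \<in> P (Suc i)" "y \<in> K' i" "c x y \<noteq> 0"
  then show "y \<in> P i" using assms(1) assms(3)[of i] unfolding closedc_def by blast
qed

lemma closedc_UN:
  assumes "\<And>J. J \<in> F \<Longrightarrow> closedc (Q J) K c"
  shows "closedc (\<lambda>i. \<Union>J\<in>F. Q J i) K c"
  unfolding closedc_def
proof (intro conjI allI impI)
  fix i show "(\<Union>J\<in>F. Q J i) \<subseteq> K i" using assms unfolding closedc_def by blast
next
  fix i x y assume "x \<in> (\<Union>J\<in>F. Q J (Suc i))" "y \<in> K i" "c x y \<noteq> 0"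
  then obtain J where J: "J \<in> F" "x \<in> Q J (Suc i)" by blast
  then have "y \<in> Q J i" using assms[OF J(1)] \<open>y \<in> K i\<close> \<open>c x y \<noteq> 0\<close> unfolding closedc_def by blast
  then show "y \<in> (\<Union>J\<in>F. Q J i)" using J by blast
qed

lemma fin_mono: "fin K \<Longrightarrow> (\<And>i. P i \<subseteq> K i) \<Longrightarrow> fin P"
  unfolding fin_def using finite_subset by metis

lemma hom_sum:
  fixes K :: "nat \<Rightarrow> 'a set" and c :: "'a \<Rightarrow> 'a \<Rightarrow> 'k::field"
  assumes fK: "fin K" and fI: "finite I" and part: "\<And>i. K i = (\<Union>J\<in>I. Q J i)"
    and disj: "\<And>i J J'. J \<in> I \<Longrightarrow> J' \<in> I \<Longrightarrow> J \<noteq> J' \<Longrightarrow> Q J i \<inter> Q J' i = {}"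
    and cl: "\<And>J. J \<in> I \<Longrightarrow> closedc (Q J) K c" and d: "dsq K c"
  shows "hom K c i = (\<Sum>J\<in>I. hom (Q J) c i)"
proof -
  have "finite F \<Longrightarrow> F \<subseteq> I \<Longrightarrow> hom (\<lambda>i. \<Union>J\<in>F. Q J i) c i = (\<Sum>J\<in>F. hom (Q J) c i)" for F
  proof (induction F rule: finite_induct)
    case empty then show ?case by (simp add: hom_empty)
  next
    case (insert a F)
    let ?KF = "\<lambda>i. \<Union>J\<in>F. Q J i"
    let ?KI = "\<lambda>i. \<Union>J\<in>insert a F. Q J i"
    have aI: "a \<in> I" and FI: "F \<subseteq> I" using insert.prems by auto
    have KIK: "?KI i \<subseteq> K i" for i using part[of i] insert.prems by auto
    have clI: "closedc ?KI K c" by (rule closedc_UN) (use cl insert.prems in auto)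
    have fKI: "fin ?KI" using fin_mono[OF fK KIK] .
    have dKI: "dsq ?KI c" using dsq_closed[OF clI fK d] .
    have cla: "closedc (Q a) ?KI c" by (rule closedc_mono[OF cl[OF aI] _ KIK]) auto
    have clF0: "closedc ?KF K c" by (rule closedc_UN) (use cl FI in auto)
    have clF: "closedc ?KF ?KI c" by (rule closedc_mono[OF clF0 _ KIK]) auto
    have dj: "Q a i \<inter> ?KF i = {}" for i
    proof -
      have "Q a i \<inter> Q J i = {}" if "J \<in> F" for J
        using disj[OF aI, of J i] that FI insert.hyps(2) by auto
      then show ?thesis by auto
    qed
    have "hom ?KI c i = hom (Q a) c i + hom ?KF c i"
      by (rule hom_dirsum[OF fKI _ dj cla clF dKI]) auto
    then show ?case using insert by simp
  qed
  moreover have "(\<lambda>i. \<Union>J\<in>I. Q J i) = K" using part by (simp add: fun_eq_iff)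
  ultimately show ?thesis using fI by auto
qed




lemma kbasis_iff:
  "(S, m) \<in> kbasis V E i d \<longleftrightarrow> S \<subseteq> V \<and> card S = i \<and> i \<le> d \<and> (\<forall>u. u \<notin> V \<longrightarrow> m u = 0) \<and>
     sum m V = d - i \<and> std_mono E m"
  by (auto simp: kbasis_def monoms_def)

lemma kcoef_nz:
  assumes "kcoef (S, m) (T, m') \<noteq> (0::'k::field)"
  shows "\<exists>s\<in>S. T = S - {s} \<and> m' = m(s := Suc (m s))"
proof -
  have c: "T \<subseteq> S" "card (S - T) = 1" "m' = m(the_elem (S - T) := Suc (m (the_elem (S - T))))"
    using assms by (auto simp: kcoef_def split: if_splits)
  obtain s where s: "S - T = {s}" using c(2) card_1_singletonE by blast
  then have "s \<in> S" "T = S - {s}" using c(1) by auto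
  then show ?thesis using c(3) s by auto
qed

lemma kcoef_val:
  assumes "s \<in> S"
  shows "kcoef (S, m) (S - {s}, m(s := Suc (m s))) = ((- 1) ^ card {t \<in> S. t < s} :: 'k::field)"
proof -
  have "S - (S - {s}) = {s}" using assms by auto
  then show ?thesis by (simp add: kcoef_def)
qed

lemma kcoef_val_nz:
  assumes "s \<in> S"
  shows "kcoef (S, m) (S - {s}, m(s := Suc (m s))) \<noteq> (0 :: 'k::field)"
  by (subst kcoef_val[OF assms]) simp

lemma std_le: "std_mono E m \<Longrightarrow> (\<And>u. m' u \<le> m u) \<Longrightarrow> std_mono E m'"
  unfolding std_mono_def by (metis le_zero_eq)

lemma sum_upd:
  assumes "finite V" "s \<in> V"
  shows "sum (m(s := a)) V + m s = sum m V + (a :: nat)"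
proof -
  have "sum (m(s := a)) V = (m(s := a)) s + sum (m(s := a)) (V - {s})" by (rule sum.remove[OF assms])
  then have "sum (m(s := a)) V = a + sum (m(s := a)) (V - {s})" by simp
  moreover have "sum (m(s := a)) (V - {s}) = sum m (V - {s})" by (rule sum.cong) auto
  moreover have "sum m V = m s + sum m (V - {s})" by (rule sum.remove[OF assms])
  ultimately show ?thesis by simp
qed

lemma kbasis_remove:
  assumes fV: "finite V" and x: "(S, m) \<in> kbasis V E (Suc j) d" and s: "s \<in> S"
    and st: "std_mono E (m(s := Suc (m s)))"
  shows "(S - {s}, m(s := Suc (m s))) \<in> kbasis V E j d"
proof -
  have x': "S \<subseteq> V" "card S = Suc j" "Suc j \<le> d" "\<forall>u. u \<notin> V \<longrightarrow> m u = 0" "sum m V = d - Suc j"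
    using x by (auto simp: kbasis_iff)
  have sV: "s \<in> V" using s x'(1) by blast
  have fS: "finite S" using finite_subset[OF x'(1) fV] .
  have "card (S - {s}) = j" using x'(2) s fS by simp
  moreover have "sum (m(s := Suc (m s))) V = d - j" using sum_upd[OF fV sV, of m "Suc (m s)"] x'(3,5) by simp
  moreover have "\<forall>u. u \<notin> V \<longrightarrow> (m(s := Suc (m s))) u = 0" using x'(4) sV by auto
  ultimately show ?thesis using x' st by (auto simp: kbasis_iff)
qed

lemma kbasis_insert:
  assumes fV: "finite V" and y: "(T, m') \<in> kbasis V E j d" and sV: "s \<in> V" and sT: "s \<notin> T"
    and ms: "m' s \<ge> 1"
  shows "(insert s T, m'(s := m' s - 1)) \<in> kbasis V E (Suc j) d"
proof -
  have y': "T \<subseteq> V" "card T = j" "j \<le> d" "\<forall>u. u \<notin> V \<longrightarrow> m' u = 0" "sum m' V = d - j" "std_mono E m'"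
    using y by (auto simp: kbasis_iff)
  have fT: "finite T" using finite_subset[OF y'(1) fV] .
  have "m' s \<le> sum m' V" using member_le_sum[OF sV, of m'] fV by simp
  then have jd: "Suc j \<le> d" using ms y'(5) by simp
  have "card (insert s T) = Suc j" using fT sT y'(2) by simp
  moreover have "sum (m'(s := m' s - 1)) V = d - Suc j" using sum_upd[OF fV sV, of m' "m' s - 1"] y'(5) ms jd by simp
  moreover have "\<forall>u. u \<notin> V \<longrightarrow> (m'(s := m' s - 1)) u = 0" using y'(4) sV by auto
  moreover have "std_mono E (m'(s := m' s - 1))" by (rule std_le[OF y'(6)]) auto
  ultimately show ?thesis using y' sV jd by (auto simp: kbasis_iff)
qed


lemma finite_monoms:
  assumes fV: "finite V" shows "finite (monoms V e)"
proof -
  have "monoms V e \<subseteq> {m. \<forall>x. (x \<in> V \<longrightarrow> m x \<in> {0..e}) \<and> (x \<notin> V \<longrightarrow> m x = 0)}"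
  proof
    fix m assume m: "m \<in> monoms V e"
    have "m x \<le> e" if "x \<in> V" for x using member_le_sum[OF that, of m] fV m by (simp add: monoms_def)
    then show "m \<in> {m. \<forall>x. (x \<in> V \<longrightarrow> m x \<in> {0..e}) \<and> (x \<notin> V \<longrightarrow> m x = 0)}" using m
      by (auto simp: monoms_def)
  qed
  then show ?thesis by (rule finite_subset) (rule finite_set_of_finite_funs[OF fV], simp)
qed

lemma finite_kbasis:
  assumes fV: "finite V" shows "finite (kbasis V E i d)"
proof -
  have "kbasis V E i d \<subseteq> Pow V \<times> monoms V (d - i)" by (auto simp: kbasis_def)
  then show ?thesis by (rule finite_subset) (use fV finite_monoms[OF fV] in simp)
qed

lemma two_sets_eq:
  assumes "a \<in> S" "b \<in> S" "a \<noteq> b" "s \<in> S" "t \<in> S" "s \<noteq> t" "S - {a} - {b} = S - {s} - {t}"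
  shows "a = s \<or> a = t"
proof (rule ccontr)
  assume "\<not> (a = s \<or> a = t)"
  then have "a \<in> S - {s} - {t}" using assms(1) by blast
  then show False using assms(7) by blast
qed

lemma koszul_inner:
  fixes V :: "'v::linorder set"
  assumes fV: "finite V" and x: "(S, m) \<in> kbasis V E (Suc (Suc j)) d" and z: "(U, m2) \<in> kbasis V E j d"
  shows "(\<Sum>y\<in>kbasis V E (Suc j) d. kcoef (S, m) y * kcoef y (U, m2) :: 'k::field) = 0"
proof -
  let ?K1 = "kbasis V E (Suc j) d"
  define ys where "ys a = (S - {a}, m(a := Suc (m a)))" for a
  have nzform: "\<exists>a b. a \<in> S \<and> b \<in> S \<and> a \<noteq> b \<and> y = ys a \<and> U = S - {a} - {b} \<and>
      m2 = m(a := Suc (m a), b := Suc (m b))"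
    if nz: "kcoef (S, m) y * kcoef y (U, m2) \<noteq> (0::'k)" for y
  proof -
    obtain T m1 where y: "y = (T, m1)" by (cases y)
    have n1: "kcoef (S, m) (T, m1) \<noteq> (0::'k)" and n2: "kcoef (T, m1) (U, m2) \<noteq> (0::'k)" using nz y by auto
    obtain a where a: "a \<in> S" "T = S - {a}" "m1 = m(a := Suc (m a))" using kcoef_nz[OF n1] by blast
    obtain b where b: "b \<in> T" "U = T - {b}" "m2 = m1(b := Suc (m1 b))" using kcoef_nz[OF n2] by blast
    have "b \<noteq> a" "b \<in> S" using a b by auto
    then show ?thesis using a b y ys_def by (intro exI[of _ a] exI[of _ b]) auto
  qed
  show ?thesis
  proof (cases "\<exists>y\<in>?K1. kcoef (S, m) y * kcoef y (U, m2) \<noteq> (0::'k)")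
    case False
    then show ?thesis by (intro sum.neutral) blast
  next
    case True
    then obtain y0 where "y0 \<in> ?K1" "kcoef (S, m) y0 * kcoef y0 (U, m2) \<noteq> (0::'k)" by blast
    then obtain a0 b0 where ab0: "a0 \<in> S" "b0 \<in> S" "a0 \<noteq> b0" "U = S - {a0} - {b0}"
        "m2 = m(a0 := Suc (m a0), b0 := Suc (m b0))"
      using nzform by blast
    define s where "s = min a0 b0"
    define t where "t = max a0 b0"
    have st: "s \<in> S" "t \<in> S" "s < t" using ab0 s_def t_def by (auto simp: min_def max_def)
    have U1: "U = S - {s} - {t}" and U2: "U = S - {t} - {s}" using ab0 s_def t_def by (auto simp: min_def max_def)
    have m21: "m2 = m(s := Suc (m s), t := Suc (m t))" and m22: "m2 = m(t := Suc (m t), s := Suc (m s))"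
      using ab0 s_def t_def by (auto simp: min_def max_def fun_eq_iff)
    have fS: "finite S" using x fV finite_subset by (auto simp: kbasis_iff)
    have std2: "std_mono E m2" using z by (simp add: kbasis_iff)
    have yK: "ys a \<in> ?K1" if "a \<in> S" "a = s \<or> a = t" for a
    proof -
      have "std_mono E (m(a := Suc (m a)))" by (rule std_le[OF std2]) (use that m21 in auto)
      then show ?thesis unfolding ys_def by (rule kbasis_remove[OF fV x that(1)])
    qed
    have sub: "{ys s, ys t} \<subseteq> ?K1" using yK st by auto
    have only: "kcoef (S, m) y * kcoef y (U, m2) = (0::'k)" if "y \<in> ?K1 - {ys s, ys t}" for y
    proof (rule ccontr)
      assume "kcoef (S, m) y * kcoef y (U, m2) \<noteq> (0::'k)"
      from nzform[OF this] obtain a b where ab: "a \<in> S" "b \<in> S" "a \<noteq> b" "y = ys a" "U = S - {a} - {b}" by blast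
      have "a = s \<or> a = t" using two_sets_eq[OF ab(1-3) st(1,2) _] st(3) ab(5) U1 by auto
      then show False using that ab(4) by auto
    qed
    have ne: "ys s \<noteq> ys t" using st by (auto simp: ys_def)
    have "(\<Sum>y\<in>?K1. kcoef (S, m) y * kcoef y (U, m2)) = (\<Sum>y\<in>{ys s, ys t}. kcoef (S, m) y * kcoef y (U, m2) :: 'k)"
      using only sub finite_kbasis[OF fV] by (intro sum.mono_neutral_right) auto
    also have "\<dots> = kcoef (S, m) (ys s) * kcoef (ys s) (U, m2) + kcoef (S, m) (ys t) * kcoef (ys t) (U, m2)"
      using ne by simp
    also have "\<dots> = 0"
    proof -
      define A where "A = card {u \<in> S. u < s}"
      define B where "B = card {u \<in> S - {s}. u < t}"
      have fin1: "finite {u \<in> S - {s}. u < t}" using fS by simp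
      have "{u \<in> S. u < t} = insert s {u \<in> S - {s}. u < t}" using st by auto
      then have cB: "card {u \<in> S. u < t} = Suc B" unfolding B_def using fin1 by simp
      have cA: "{u \<in> S - {t}. u < s} = {u \<in> S. u < s}" using st by auto
      have t_in: "t \<in> S - {s}" using st by auto
      have s_in: "s \<in> S - {t}" using st by auto
      have e1: "kcoef (S, m) (ys s) = ((- 1) ^ A :: 'k)" unfolding ys_def A_def by (rule kcoef_val[OF st(1)])
      have "kcoef (ys s) (U, m2) = kcoef (S - {s}, m(s := Suc (m s))) (S - {s} - {t}, (m(s := Suc (m s)))(t := Suc ((m(s := Suc (m s))) t)))"
        using U1 m21 st less_imp_neq[OF st(3)] by (simp add: ys_def)
      also have "\<dots> = ((- 1) ^ B :: 'k)" unfolding B_def by (rule kcoef_val[OF t_in])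
      finally have e2: "kcoef (ys s) (U, m2) = ((- 1) ^ B :: 'k)" .
      have e3: "kcoef (S, m) (ys t) = ((- 1) ^ Suc B :: 'k)" unfolding ys_def using kcoef_val[OF st(2), of m] cB by simp
      have "kcoef (ys t) (U, m2) = kcoef (S - {t}, m(t := Suc (m t))) (S - {t} - {s}, (m(t := Suc (m t)))(s := Suc ((m(t := Suc (m t))) s)))"
        using U2 m22 st less_imp_neq[OF st(3)] by (simp add: ys_def)
      also have "\<dots> = ((- 1) ^ A :: 'k)" unfolding A_def using kcoef_val[OF s_in, of "m(t := Suc (m t))"] cA by simp
      finally have e4: "kcoef (ys t) (U, m2) = ((- 1) ^ A :: 'k)" .
      show ?thesis using e1 e2 e3 e4 by simp
    qed
    finally show ?thesis .
  qed
qed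

lemma dsq_kbasis:
  fixes V :: "'v::linorder set"
  assumes fV: "finite V"
  shows "dsq (\<lambda>j. kbasis V E j d) (kcoef :: _ \<Rightarrow> _ \<Rightarrow> 'k::field)"
  unfolding dsq_def
proof (intro allI impI)
  fix j and f :: "'v set \<times> ('v \<Rightarrow> nat) \<Rightarrow> 'k"
  assume f: "f \<in> ch (\<lambda>j. kbasis V E j d) (Suc (Suc j))"
  let ?K = "\<lambda>j. kbasis V E j d"
  show "bd ?K kcoef (Suc j) (bd ?K kcoef (Suc (Suc j)) f) = 0"
  proof
    fix z
    show "bd ?K kcoef (Suc j) (bd ?K kcoef (Suc (Suc j)) f) z = 0 z"
    proof (cases "z \<in> ?K j")
      case False then show ?thesis by (simp add: bd_def)
    next
      case True
      obtain U m2 where z: "z = (U, m2)" by (cases z)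
      have "bd ?K kcoef (Suc j) (bd ?K kcoef (Suc (Suc j)) f) z =
          (\<Sum>y\<in>?K (Suc j). (\<Sum>x\<in>?K (Suc (Suc j)). f x * kcoef x y) * kcoef y z)"
        using True by (simp add: bd_def)
      also have "\<dots> = (\<Sum>y\<in>?K (Suc j). \<Sum>x\<in>?K (Suc (Suc j)). f x * (kcoef x y * kcoef y z))"
        by (simp add: sum_distrib_right mult.assoc)
      also have "\<dots> = (\<Sum>x\<in>?K (Suc (Suc j)). f x * (\<Sum>y\<in>?K (Suc j). kcoef x y * kcoef y z))"
        by (subst sum.swap) (simp add: sum_distrib_left)
      also have "\<dots> = 0"
      proof (intro sum.neutral ballI)
        fix x assume x: "x \<in> ?K (Suc (Suc j))"
        obtain S m where xs: "x = (S, m)" by (cases x)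
        have "(\<Sum>y\<in>?K (Suc j). kcoef x y * kcoef y z) = (0::'k)"
          using koszul_inner[OF fV x[unfolded xs] True[unfolded z]] xs z by simp
        then show "f x * (\<Sum>y\<in>?K (Suc j). kcoef x y * kcoef y z) = 0" by simp
      qed
      finally show ?thesis by simp
    qed
  qed
qed


lemma betti_hom:
  "betti_nat TYPE('k::field) V E i d = hom (\<lambda>j. kbasis V E j d) (kcoef :: _ \<Rightarrow> _ \<Rightarrow> 'k) i"
proof -
  have "kchains V E j d = (ch (\<lambda>j. kbasis V E j d) j :: (_ \<Rightarrow> 'k) set)" for j
    by (simp add: kchains_def ch_def)
  moreover have "kdiff V E j d = (bd (\<lambda>j. kbasis V E j d) kcoef j :: (_ \<Rightarrow> 'k) \<Rightarrow> _)" for j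
    by (simp add: kdiff_def bd_def fun_eq_iff)
  ultimately have "kcycles V E j d = (cyc (\<lambda>j. kbasis V E j d) kcoef j :: (_ \<Rightarrow> 'k) set)"
      "kboundaries V E j d = (bnd (\<lambda>j. kbasis V E j d) kcoef j :: (_ \<Rightarrow> 'k) set)" for j
    by (simp_all add: kcycles_def cyc_def kboundaries_def bnd_def)
  then show ?thesis by (simp add: betti_nat_def hom_def)
qed

definition rem :: "'v \<Rightarrow> 'v set \<times> ('v \<Rightarrow> nat) \<Rightarrow> 'v set \<times> ('v \<Rightarrow> nat)" where
  "rem a x = (fst x - {a}, (snd x)(a := Suc (snd x a)))"

definition ins :: "'v \<Rightarrow> 'v set \<times> ('v \<Rightarrow> nat) \<Rightarrow> 'v set \<times> ('v \<Rightarrow> nat)" where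
  "ins a x = (insert a (fst x), (snd x)(a := snd x a - 1))"

lemma closed_pred:
  assumes P: "\<And>j. P j = {x \<in> K j. p x}"
    and step: "\<And>j S m s. (S, m) \<in> K (Suc j) \<Longrightarrow> p (S, m) \<Longrightarrow> s \<in> S \<Longrightarrow>
        (S - {s}, m(s := Suc (m s))) \<in> K j \<Longrightarrow> p (S - {s}, m(s := Suc (m s)))"
  shows "closedc P K (kcoef :: _ \<Rightarrow> _ \<Rightarrow> 'k::field)"
  unfolding closedc_def
proof (intro conjI allI impI)
  fix j show "P j \<subseteq> K j" using P by auto
next
  fix j x y assume x: "x \<in> P (Suc j)" and y: "y \<in> K j" and nz: "kcoef x y \<noteq> (0::'k)"
  obtain S m where xs: "x = (S, m)" by (cases x)
  obtain T m' where ys: "y = (T, m')" by (cases y)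
  obtain s where s: "s \<in> S" "T = S - {s}" "m' = m(s := Suc (m s))" using kcoef_nz[OF nz[unfolded xs ys]] by blast
  have "p (S - {s}, m(s := Suc (m s)))" using step[of S m j s] x y xs ys s P by auto
  then show "y \<in> P j" using y ys s P by auto
qed

locale leafsetup =
  fixes V :: "'v::linorder set" and E :: "'v set set" and v :: 'v and v1 :: 'v and N' :: "'v set"
    and d :: nat
  assumes sg: "simple_graph V E"
    and vV: "v \<in> V"
    and nb: "neighbours E v = insert v1 N'"
    and v1N': "v1 \<notin> N'"
    and leaf: "neighbours E v1 = {v}"
begin

definition "K j = kbasis V E j d"
definition "Vp = V - {v1}"
definition "Ep = induced E Vp"
definition "Vpp = V - insert v (insert v1 N')"
definition "Epp = induced E Vpp"
definition "A j = {x \<in> K j. v1 \<notin> fst x \<and> snd x v1 = 0}"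
definition "B j = {x \<in> K j. v1 \<in> fst x \<or> snd x v1 \<ge> 1}"
definition "P1 j = {x \<in> K j. v1 \<in> fst x \<and> snd x v = 0}"
definition "P2 j = {x \<in> K j. v1 \<notin> fst x \<and> snd x v1 \<ge> 1}"
definition "P3 j = {x \<in> K j. v1 \<in> fst x \<and> snd x v \<ge> 1}"
definition "R1 j = {x \<in> P3 j. v \<in> fst x}"
definition "R2 j = {x \<in> P3 j. v \<notin> fst x \<and> snd x v \<ge> 2}"
definition "R3 j = {x \<in> P3 j. v \<notin> fst x \<and> snd x v = 1}"
definition "Q J j = {x \<in> R3 j. fst x \<inter> N' = J}"

lemma fV: "finite V" using sg by (simp add: simple_graph_def)

lemma edge: "e \<in> E \<Longrightarrow> \<exists>a b. e = {a, b} \<and> a \<noteq> b \<and> a \<in> V \<and> b \<in> V"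
  using sg by (simp add: simple_graph_def)

lemma vv1E: "{v, v1} \<in> E"
proof -
  have "v1 \<in> neighbours E v" using nb by simp
  then show ?thesis by (simp add: neighbours_def)
qed

lemma vv1: "v \<noteq> v1" using edge[OF vv1E] by (auto simp: doubleton_eq_iff)

lemma v1V: "v1 \<in> V" using edge[OF vv1E] by (auto simp: doubleton_eq_iff)

lemma nbE: "w \<in> insert v1 N' \<Longrightarrow> {v, w} \<in> E" using nb by (auto simp: neighbours_def)

lemma N'E: "w \<in> N' \<Longrightarrow> {v, w} \<in> E" using nbE by blast

lemma nbV: "w \<in> insert v1 N' \<Longrightarrow> w \<in> V \<and> w \<noteq> v"
proof -
  assume "w \<in> insert v1 N'"
  then have "{v, w} \<in> E" by (rule nbE)
  then obtain a b where "{v, w} = {a, b}" "a \<noteq> b" "a \<in> V" "b \<in> V" using edge by blast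
  then show ?thesis by (auto simp: doubleton_eq_iff)
qed

lemma e_v1: "e \<in> E \<Longrightarrow> v1 \<in> e \<Longrightarrow> e = {v, v1}"
proof -
  assume e: "e \<in> E" "v1 \<in> e"
  obtain a b where ab: "e = {a, b}" "a \<noteq> b" using edge[OF e(1)] by blast
  show ?thesis
  proof (cases "a = v1")
    case True
    then have "b \<in> neighbours E v1" using e ab by (simp add: neighbours_def)
    then show ?thesis using leaf ab True by auto
  next
    case False
    then have "b = v1" using e ab by auto
    then have "a \<in> neighbours E v1" using e ab by (simp add: neighbours_def insert_commute)
    then show ?thesis using leaf ab \<open>b = v1\<close> by auto
  qed
qed

lemma e_v: "e \<in> E \<Longrightarrow> v \<in> e \<Longrightarrow> \<exists>w\<in>insert v1 N'. e = {v, w}"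
proof -
  assume e: "e \<in> E" "v \<in> e"
  obtain a b where ab: "e = {a, b}" "a \<noteq> b" using edge[OF e(1)] by blast
  show ?thesis
  proof (cases "a = v")
    case True
    then have "b \<in> neighbours E v" using e ab by (simp add: neighbours_def)
    then show ?thesis using nb ab True by auto
  next
    case False
    then have "b = v" using e ab by auto
    then have "a \<in> neighbours E v" using e ab by (simp add: neighbours_def insert_commute)
    then show ?thesis using nb ab \<open>b = v\<close> by (auto simp: insert_commute)
  qed
qed

lemma finK: "fin K" by (simp add: fin_def K_def finite_kbasis[OF fV])

lemma dsqK: "dsq K (kcoef :: _ \<Rightarrow> _ \<Rightarrow> 'k::field)"
  using dsq_kbasis[OF fV, of E d] by (simp add: K_def[abs_def])

lemma KD: "(S, m) \<in> K j \<Longrightarrow> S \<subseteq> V \<and> card S = j \<and> j \<le> d \<and> (\<forall>u. u \<notin> V \<longrightarrow> m u = 0) \<and> sum m V = d - j \<and> std_mono E m"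
  by (simp add: K_def kbasis_iff)

lemma K_std: "(S, m) \<in> K j \<Longrightarrow> e \<in> E \<Longrightarrow> \<exists>u\<in>e. m u = 0"
  using KD by (auto simp: std_mono_def)

lemma K0: "(S, m) \<in> K 0 \<Longrightarrow> S = {}"
proof -
  assume "(S, m) \<in> K 0"
  then have "S \<subseteq> V" "card S = 0" using KD[of S m 0] by auto
  then show "S = {}" using finite_subset[OF _ fV] by auto
qed

lemma std_v1: "(S, m) \<in> K j \<Longrightarrow> m v1 \<ge> 1 \<Longrightarrow> m v = 0"
  using K_std[OF _ vv1E, of S m j] by auto

lemma std_vw: "(S, m) \<in> K j \<Longrightarrow> m v \<ge> 1 \<Longrightarrow> w \<in> insert v1 N' \<Longrightarrow> m w = 0"
  using K_std[OF _ nbE, of S m j w] by auto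

lemma rem_K:
  assumes x: "(S, m) \<in> K (Suc j)" and s: "s \<in> S"
    and st: "\<And>e. e \<in> E \<Longrightarrow> s \<in> e \<Longrightarrow> \<exists>u\<in>e. u \<noteq> s \<and> m u = 0"
  shows "rem s (S, m) \<in> K j"
proof -
  have "std_mono E (m(s := Suc (m s)))"
    unfolding std_mono_def
  proof
    fix e assume e: "e \<in> E"
    show "\<exists>u\<in>e. (m(s := Suc (m s))) u = 0"
    proof (cases "s \<in> e")
      case True then show ?thesis using st[OF e] by auto
    next
      case False
      obtain u where "u \<in> e" "m u = 0" using K_std[OF x e] by blast
      then show ?thesis using False by (intro bexI[of _ u]) auto
    qed
  qed
  then show ?thesis using kbasis_remove[OF fV x[unfolded K_def] s] by (simp add: rem_def K_def)
qed

lemma ins_K: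
  assumes y: "(T, m) \<in> K j" and sV: "s \<in> V" and sT: "s \<notin> T" and ms: "m s \<ge> 1"
  shows "ins s (T, m) \<in> K (Suc j)"
  using kbasis_insert[OF fV y[unfolded K_def] sV sT ms] by (simp add: ins_def K_def)

lemma rem_ins: "a \<notin> T \<Longrightarrow> m a \<ge> 1 \<Longrightarrow> rem a (ins a (T, m)) = (T, m)"
  by (auto simp: rem_def ins_def fun_eq_iff)

lemma ins_rem: "a \<in> S \<Longrightarrow> ins a (rem a (S, m)) = (S, m)"
  by (auto simp: rem_def ins_def fun_eq_iff)

lemma kcoef_rem_nz: "a \<in> S \<Longrightarrow> kcoef (S, m) (rem a (S, m)) \<noteq> (0::'k::field)"
  unfolding rem_def using kcoef_val_nz by simp

lemma kcoef_only:
  assumes "kcoef (S, m) y \<noteq> (0::'k::field)" "a \<in> S" "a \<notin> fst y"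
  shows "y = rem a (S, m)"
proof -
  obtain T m' where ys: "y = (T, m')" by (cases y)
  obtain s where s: "s \<in> S" "T = S - {s}" "m' = m(s := Suc (m s))" using kcoef_nz assms(1) ys by blast
  have "s = a" using assms(2,3) ys s by auto
  then show ?thesis using ys s by (simp add: rem_def)
qed


lemma L1: "hom K (kcoef :: _ \<Rightarrow> _ \<Rightarrow> 'k::field) i = hom A (kcoef :: _ \<Rightarrow> _ \<Rightarrow> 'k) i + hom B (kcoef :: _ \<Rightarrow> _ \<Rightarrow> 'k) i"
proof (rule hom_dirsum)
  show "fin K" by (rule finK)
  show "dsq K (kcoef :: _ \<Rightarrow> _ \<Rightarrow> 'k)" by (rule dsqK)
  show "K j = A j \<union> B j" for j by (auto simp: A_def B_def)
  show "A j \<inter> B j = {}" for j by (auto simp: A_def B_def)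
  show "closedc A K (kcoef :: _ \<Rightarrow> _ \<Rightarrow> 'k)"
    by (rule closed_pred[where p = "\<lambda>x. v1 \<notin> fst x \<and> snd x v1 = 0"]) (auto simp: A_def)
  show "closedc B K (kcoef :: _ \<Rightarrow> _ \<Rightarrow> 'k)"
    by (rule closed_pred[where p = "\<lambda>x. v1 \<in> fst x \<or> snd x v1 \<ge> 1"]) (auto simp: B_def)
qed

lemma A_eq: "A = (\<lambda>j. kbasis Vp Ep j d)"
proof (intro ext set_eqI)
  fix j and x :: "'v set \<times> ('v \<Rightarrow> nat)"
  obtain S m where xs: "x = (S, m)" by (cases x)
  have sumeq: "sum m V = sum m Vp" if "m v1 = 0"
  proof -
    have "sum m V = m v1 + sum m (V - {v1})" by (rule sum.remove[OF fV v1V])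
    then show ?thesis using that by (simp add: Vp_def)
  qed
  show "x \<in> A j \<longleftrightarrow> x \<in> kbasis Vp Ep j d"
  proof
    assume "x \<in> A j"
    then have x: "(S, m) \<in> K j" "v1 \<notin> S" "m v1 = 0" using xs by (auto simp: A_def)
    have k: "S \<subseteq> V" "card S = j" "j \<le> d" "\<forall>u. u \<notin> V \<longrightarrow> m u = 0" "sum m V = d - j" "std_mono E m"
      using KD[OF x(1)] by auto
    have "std_mono Ep m" using k(6) by (auto simp: std_mono_def Ep_def induced_def)
    moreover have "\<forall>u. u \<notin> Vp \<longrightarrow> m u = 0" using k(4) x(3) by (auto simp: Vp_def)
    moreover have "S \<subseteq> Vp" using k(1) x(2) by (auto simp: Vp_def)
    ultimately show "x \<in> kbasis Vp Ep j d" using xs k sumeq[OF x(3)] by (simp add: kbasis_iff)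
  next
    assume "x \<in> kbasis Vp Ep j d"
    then have k: "S \<subseteq> Vp" "card S = j" "j \<le> d" "\<forall>u. u \<notin> Vp \<longrightarrow> m u = 0" "sum m Vp = d - j" "std_mono Ep m"
      using xs by (auto simp: kbasis_iff)
    have m1: "m v1 = 0" using k(4) by (simp add: Vp_def)
    have "std_mono E m"
      unfolding std_mono_def
    proof
      fix e assume e: "e \<in> E"
      show "\<exists>u\<in>e. m u = 0"
      proof (cases "e \<subseteq> Vp")
        case True
        then have "e \<in> Ep" using e by (simp add: Ep_def induced_def)
        then show ?thesis using k(6) by (simp add: std_mono_def)
      next
        case False
        then obtain u where u: "u \<in> e" "u \<notin> Vp" by blast
        have "u \<in> V" using edge[OF e] u(1) by auto
        then have "u = v1" using u(2) by (simp add: Vp_def)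
        then show ?thesis using u(1) m1 by blast
      qed
    qed
    moreover have "\<forall>u. u \<notin> V \<longrightarrow> m u = 0" using k(4) by (auto simp: Vp_def)
    moreover have "S \<subseteq> V" "v1 \<notin> S" using k(1) by (auto simp: Vp_def)
    ultimately show "x \<in> A j" using xs k sumeq[OF m1] m1 by (simp add: A_def K_def kbasis_iff)
  qed
qed

lemma clP3K: "closedc P3 K (kcoef :: _ \<Rightarrow> _ \<Rightarrow> 'k::field)"
proof (rule closed_pred[where p = "\<lambda>x. v1 \<in> fst x \<and> snd x v \<ge> 1"])
  show "P3 j = {x \<in> K j. v1 \<in> fst x \<and> snd x v \<ge> 1}" for j by (simp add: P3_def)
next
  fix j S m s
  assume x: "(S, m) \<in> K (Suc j)" "v1 \<in> fst (S, m) \<and> 1 \<le> snd (S, m) v" "s \<in> S"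
    and y: "(S - {s}, m(s := Suc (m s))) \<in> K j"
  show "v1 \<in> fst (S - {s}, m(s := Suc (m s))) \<and> 1 \<le> snd (S - {s}, m(s := Suc (m s))) v"
  proof (cases "s = v1")
    case True
    have "(m(s := Suc (m s))) v = 0" using std_v1[OF y] True by simp
    then show ?thesis using x True vv1 by simp
  next
    case False then show ?thesis using x by auto
  qed
qed

lemma clBK: "closedc B K (kcoef :: _ \<Rightarrow> _ \<Rightarrow> 'k::field)"
  by (rule closed_pred[where p = "\<lambda>x. v1 \<in> fst x \<or> snd x v1 \<ge> 1"]) (auto simp: B_def)

lemma L3: "hom B (kcoef :: _ \<Rightarrow> _ \<Rightarrow> 'k::field) i = hom P3 (kcoef :: _ \<Rightarrow> _ \<Rightarrow> 'k) i"
proof (rule hom_elim[where ?P1.0 = P1 and ?P2.0 = P2 and g = "rem v1"])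
  show "fin B" by (rule fin_mono[OF finK]) (auto simp: B_def)
  show "B j = P1 j \<union> P2 j \<union> P3 j" for j by (auto simp: B_def P1_def P2_def P3_def)
  show "P1 j \<inter> P2 j = {}" "P1 j \<inter> P3 j = {}" "P2 j \<inter> P3 j = {}" for j
    by (auto simp: P1_def P2_def P3_def)
  show "P1 0 = {}" using K0 by (auto simp: P1_def)
  show "closedc P3 B (kcoef :: _ \<Rightarrow> _ \<Rightarrow> 'k)"
    by (rule closedc_mono[OF clP3K]) (auto simp: P3_def B_def)
  show "dsq B (kcoef :: _ \<Rightarrow> _ \<Rightarrow> 'k)" by (rule dsq_closed[OF clBK finK dsqK])
  show "bij_betw (rem v1) (P1 (Suc j)) (P2 j)" for j
  proof (rule bij_betw_byWitness[where f' = "ins v1"])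
    show "\<forall>a\<in>P1 (Suc j). ins v1 (rem v1 a) = a" using ins_rem by (auto simp: P1_def)
    show "\<forall>a\<in>P2 j. rem v1 (ins v1 a) = a" using rem_ins by (auto simp: P2_def)
    show "rem v1 ` P1 (Suc j) \<subseteq> P2 j"
    proof
      fix y assume "y \<in> rem v1 ` P1 (Suc j)"
      then obtain S m where x: "(S, m) \<in> K (Suc j)" "v1 \<in> S" "m v = 0" and y: "y = rem v1 (S, m)"
        by (auto simp: P1_def)
      have "rem v1 (S, m) \<in> K j"
      proof (rule rem_K[OF x(1,2)])
        fix e assume "e \<in> E" "v1 \<in> e"
        then have "e = {v, v1}" by (rule e_v1)
        then show "\<exists>u\<in>e. u \<noteq> v1 \<and> m u = 0" using x(3) vv1 by auto
      qed
      then show "y \<in> P2 j" using y by (simp add: P2_def rem_def)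
    qed
    show "ins v1 ` P2 j \<subseteq> P1 (Suc j)"
    proof
      fix x assume "x \<in> ins v1 ` P2 j"
      then obtain T m where y: "(T, m) \<in> K j" "v1 \<notin> T" "m v1 \<ge> 1" and x: "x = ins v1 (T, m)"
        by (auto simp: P2_def)
      have "ins v1 (T, m) \<in> K (Suc j)" by (rule ins_K[OF y(1) v1V y(2,3)])
      moreover have "m v = 0" using std_v1[OF y(1,3)] .
      ultimately show "x \<in> P1 (Suc j)" using x vv1 by (simp add: P1_def ins_def)
    qed
  qed
  show "kcoef x (rem v1 x) \<noteq> (0::'k)" if "x \<in> P1 (Suc j)" for j x
    using that kcoef_rem_nz[of v1 "fst x" "snd x"] by (auto simp: P1_def)
  show "kcoef x y = (0::'k)" if "x \<in> P1 (Suc j)" "y \<in> P2 j" "y \<noteq> rem v1 x" for j x y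
  proof (rule ccontr)
    assume nz: "kcoef x y \<noteq> (0::'k)"
    obtain S m where xs: "x = (S, m)" by (cases x)
    have "y = rem v1 (S, m)" using kcoef_only[OF nz[unfolded xs]] that xs by (auto simp: P1_def P2_def)
    then show False using that xs by simp
  qed
qed


lemma clR3P3: "closedc R3 P3 (kcoef :: _ \<Rightarrow> _ \<Rightarrow> 'k::field)"
  by (rule closed_pred[where p = "\<lambda>x. v \<notin> fst x \<and> snd x v = 1"]) (auto simp: R3_def)

lemma clR3K: "closedc R3 K (kcoef :: _ \<Rightarrow> _ \<Rightarrow> 'k::field)"
  unfolding closedc_def
proof (intro conjI allI impI)
  fix j show "R3 j \<subseteq> K j" by (auto simp: R3_def P3_def)
next
  fix j x y assume x: "x \<in> R3 (Suc j)" and y: "y \<in> K j" and nz: "kcoef x y \<noteq> (0::'k)"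
  have "x \<in> P3 (Suc j)" using x by (simp add: R3_def)
  then have "y \<in> P3 j" using clP3K[where 'k='k] y nz unfolding closedc_def by blast
  then show "y \<in> R3 j" using clR3P3[where 'k='k] x nz unfolding closedc_def by blast
qed

lemma L4: "hom P3 (kcoef :: _ \<Rightarrow> _ \<Rightarrow> 'k::field) i = hom R3 (kcoef :: _ \<Rightarrow> _ \<Rightarrow> 'k) i"
proof (rule hom_elim[where ?P1.0 = R1 and ?P2.0 = R2 and g = "rem v"])
  show "fin P3" by (rule fin_mono[OF finK]) (auto simp: P3_def)
  show "P3 j = R1 j \<union> R2 j \<union> R3 j" for j by (auto simp: R1_def R2_def R3_def P3_def)
  show "R1 j \<inter> R2 j = {}" "R1 j \<inter> R3 j = {}" "R2 j \<inter> R3 j = {}" for j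
    by (auto simp: R1_def R2_def R3_def)
  show "R1 0 = {}" using K0 by (auto simp: R1_def P3_def)
  show "closedc R3 P3 (kcoef :: _ \<Rightarrow> _ \<Rightarrow> 'k)" by (rule clR3P3)
  show "dsq P3 (kcoef :: _ \<Rightarrow> _ \<Rightarrow> 'k)" by (rule dsq_closed[OF clP3K finK dsqK])
  show "bij_betw (rem v) (R1 (Suc j)) (R2 j)" for j
  proof (rule bij_betw_byWitness[where f' = "ins v"])
    show "\<forall>a\<in>R1 (Suc j). ins v (rem v a) = a" using ins_rem by (auto simp: R1_def)
    show "\<forall>a\<in>R2 j. rem v (ins v a) = a"
    proof
      fix a assume a: "a \<in> R2 j"
      obtain T m where as: "a = (T, m)" by (cases a)
      have "v \<notin> T" "m v \<ge> 1" using a as by (auto simp: R2_def)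
      then show "rem v (ins v a) = a" using rem_ins as by simp
    qed
    show "rem v ` R1 (Suc j) \<subseteq> R2 j"
    proof
      fix y assume "y \<in> rem v ` R1 (Suc j)"
      then obtain S m where x: "(S, m) \<in> K (Suc j)" "v1 \<in> S" "m v \<ge> 1" "v \<in> S" and y: "y = rem v (S, m)"
        by (auto simp: R1_def P3_def)
      have "rem v (S, m) \<in> K j"
      proof (rule rem_K[OF x(1,4)])
        fix e assume "e \<in> E" "v \<in> e"
        then obtain w where w: "w \<in> insert v1 N'" "e = {v, w}" using e_v by blast
        have "m w = 0" using std_vw[OF x(1,3) w(1)] .
        moreover have "w \<noteq> v" using nbV[OF w(1)] by simp
        ultimately show "\<exists>u\<in>e. u \<noteq> v \<and> m u = 0" using w(2) by blast
      qed
      then show "y \<in> R2 j" using y x vv1 by (simp add: R2_def P3_def rem_def)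
    qed
    show "ins v ` R2 j \<subseteq> R1 (Suc j)"
    proof
      fix x assume "x \<in> ins v ` R2 j"
      then obtain T m where y: "(T, m) \<in> K j" "v1 \<in> T" "v \<notin> T" "m v \<ge> 2" and x: "x = ins v (T, m)"
        by (auto simp: R2_def P3_def)
      have "ins v (T, m) \<in> K (Suc j)" by (rule ins_K[OF y(1) vV y(3)]) (use y(4) in simp)
      then show "x \<in> R1 (Suc j)" using x y by (simp add: R1_def P3_def ins_def)
    qed
  qed
  show "kcoef x (rem v x) \<noteq> (0::'k)" if "x \<in> R1 (Suc j)" for j x
    using that kcoef_rem_nz[of v "fst x" "snd x"] by (auto simp: R1_def)
  show "kcoef x y = (0::'k)" if "x \<in> R1 (Suc j)" "y \<in> R2 j" "y \<noteq> rem v x" for j x y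
  proof (rule ccontr)
    assume nz: "kcoef x y \<noteq> (0::'k)"
    obtain S m where xs: "x = (S, m)" by (cases x)
    have "y = rem v (S, m)" using kcoef_only[OF nz[unfolded xs]] that xs by (auto simp: R1_def R2_def)
    then show False using that xs by simp
  qed
qed

lemma N'V: "N' \<subseteq> V" using nbV by blast

lemma L5: "hom R3 (kcoef :: _ \<Rightarrow> _ \<Rightarrow> 'k::field) i = (\<Sum>J\<in>Pow N'. hom (Q J) (kcoef :: _ \<Rightarrow> _ \<Rightarrow> 'k) i)"
proof (rule hom_sum)
  show "fin R3" by (rule fin_mono[OF finK]) (auto simp: R3_def P3_def)
  show "finite (Pow N')" using finite_subset[OF N'V fV] by simp
  show "R3 j = (\<Union>J\<in>Pow N'. Q J j)" for j
  proof
    show "R3 j \<subseteq> (\<Union>J\<in>Pow N'. Q J j)"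
    proof
      fix x assume "x \<in> R3 j"
      then have "x \<in> Q (fst x \<inter> N') j" "fst x \<inter> N' \<in> Pow N'" by (simp_all add: Q_def)
      then show "x \<in> (\<Union>J\<in>Pow N'. Q J j)" by blast
    qed
  qed (auto simp: Q_def)
  show "Q J j \<inter> Q J' j = {}" if "J \<noteq> J'" for J J' j
  proof -
    have "x \<notin> Q J' j" if "x \<in> Q J j" for x using that \<open>J \<noteq> J'\<close> by (simp add: Q_def)
    then show ?thesis by blast
  qed
  show "dsq R3 (kcoef :: _ \<Rightarrow> _ \<Rightarrow> 'k)" by (rule dsq_closed[OF clR3K finK dsqK])
  show "closedc (Q J) R3 (kcoef :: _ \<Rightarrow> _ \<Rightarrow> 'k)" for J
  proof (rule closed_pred[where p = "\<lambda>x. fst x \<inter> N' = J"])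
    show "Q J j = {x \<in> R3 j. fst x \<inter> N' = J}" for j by (simp add: Q_def)
  next
    fix j S m s
    assume x: "(S, m) \<in> R3 (Suc j)" "fst (S, m) \<inter> N' = J" "s \<in> S"
      and y: "(S - {s}, m(s := Suc (m s))) \<in> R3 j"
    have "s \<notin> N'"
    proof
      assume sN: "s \<in> N'"
      have yK: "(S - {s}, m(s := Suc (m s))) \<in> K j" and yv: "(m(s := Suc (m s))) v = 1"
        using y by (simp_all add: R3_def P3_def)
      have "(m(s := Suc (m s))) s = 0" by (rule std_vw[OF yK]) (use yv sN in simp_all)
      then show False by simp
    qed
    then have "(S - {s}) \<inter> N' = S \<inter> N'" by blast
    then show "fst (S - {s}, m(s := Suc (m s))) \<inter> N' = J" using x(2) by simp
  qed
qed


definition "Kpp e j = kbasis Vpp Epp j e"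
definition "phi J x = (fst x - insert v1 J, (snd x)(v := 0))"
definition "psi J y = (fst y \<union> insert v1 J, (snd y)(v := 1))"

lemma fVpp: "finite Vpp" using fV by (simp add: Vpp_def)

lemma VppV: "Vpp \<subseteq> V" by (auto simp: Vpp_def)

lemma QD: "(S, m) \<in> Q J j \<Longrightarrow> (S, m) \<in> K j \<and> v1 \<in> S \<and> v \<notin> S \<and> m v = 1 \<and> S \<inter> N' = J"
  by (auto simp: Q_def R3_def P3_def)

lemma QI: "(S, m) \<in> K j \<Longrightarrow> v1 \<in> S \<Longrightarrow> v \<notin> S \<Longrightarrow> m v = 1 \<Longrightarrow> S \<inter> N' = J \<Longrightarrow> (S, m) \<in> Q J j"
  by (auto simp: Q_def R3_def P3_def)

lemma card_F: "J \<subseteq> N' \<Longrightarrow> card (insert v1 J) = card J + 1"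
  using v1N' finite_subset[OF N'V fV] finite_subset by (metis Suc_eq_plus1 card_insert_disjoint subsetD)

lemma Q_card:
  assumes J: "J \<subseteq> N'" and x: "(S, m) \<in> Q J j"
  shows "card J + 1 \<le> j \<and> j + 1 \<le> d"
proof -
  have q: "(S, m) \<in> K j" "v1 \<in> S" "v \<notin> S" "m v = 1" "S \<inter> N' = J" using QD[OF x] by auto
  have k: "S \<subseteq> V" "card S = j" "j \<le> d" "sum m V = d - j" using KD[OF q(1)] by auto
  have fS: "finite S" using finite_subset[OF k(1) fV] .
  have "insert v1 J \<subseteq> S" using q by auto
  then have "card (insert v1 J) \<le> card S" using card_mono[OF fS] by blast
  then have c1: "card J + 1 \<le> j" using card_F[OF J] k(2) by simp
  have "m v \<le> sum m V" using member_le_sum[OF vV, of m] fV by simp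
  then have "j + 1 \<le> d" using q(4) k(3,4) by simp
  then show ?thesis using c1 by simp
qed

lemma Q_empty:
  assumes J: "J \<subseteq> N'" and d: "\<not> card J + 2 \<le> d"
  shows "Q J j = {}"
proof (rule ccontr)
  assume "Q J j \<noteq> {}"
  then obtain S m where "(S, m) \<in> Q J j" by auto
  then show False using Q_card[OF J] d by fastforce
qed

lemma Vpp_disj: "u \<in> Vpp \<Longrightarrow> u \<noteq> v \<and> u \<noteq> v1 \<and> u \<notin> N'"
  by (auto simp: Vpp_def)

lemma phi_in:
  assumes J: "J \<subseteq> N'" and dJ: "card J + 2 \<le> d" and x: "(S, m) \<in> Q J j"
  shows "card J + 1 \<le> j \<and> phi J (S, m) \<in> Kpp (d - (card J + 2)) (j - (card J + 1))"
proof -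
  have q: "(S, m) \<in> K j" "v1 \<in> S" "v \<notin> S" "m v = 1" "S \<inter> N' = J" using QD[OF x] by auto
  have k: "S \<subseteq> V" "card S = j" "j \<le> d" "\<forall>u. u \<notin> V \<longrightarrow> m u = 0" "sum m V = d - j" "std_mono E m"
    using KD[OF q(1)] by auto
  have cj: "card J + 1 \<le> j" "j + 1 \<le> d" using Q_card[OF J x] by auto
  have fS: "finite S" using finite_subset[OF k(1) fV] .
  have FS: "insert v1 J \<subseteq> S" using q by auto
  define m'' where "m'' = m(v := 0)"
  have S''V: "S - insert v1 J \<subseteq> Vpp"
  proof
    fix u assume u: "u \<in> S - insert v1 J"
    then have "u \<in> V" "u \<noteq> v" "u \<noteq> v1" "u \<notin> N'" using k(1) q by auto
    then show "u \<in> Vpp" by (simp add: Vpp_def)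
  qed
  have cS'': "card (S - insert v1 J) = j - (card J + 1)"
    using card_Diff_subset[OF finite_subset[OF FS fS] FS] k(2) card_F[OF J] by simp
  have supp: "\<forall>u. u \<notin> Vpp \<longrightarrow> m'' u = 0"
  proof (intro allI impI)
    fix u assume u: "u \<notin> Vpp"
    show "m'' u = 0"
    proof (cases "u \<in> V")
      case False then show ?thesis using k(4) by (simp add: m''_def)
    next
      case True
      then have "u = v \<or> u \<in> insert v1 N'" using u by (simp add: Vpp_def)
      then show ?thesis
      proof
        assume "u = v" then show ?thesis by (simp add: m''_def)
      next
        assume "u \<in> insert v1 N'"
        then have "m u = 0" "u \<noteq> v" using std_vw[OF q(1) _ \<open>u \<in> insert v1 N'\<close>] q(4) nbV by auto
        then show ?thesis by (simp add: m''_def)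
      qed
    qed
  qed
  have s1: "sum m'' V + m v = sum m V + 0" unfolding m''_def by (rule sum_upd[OF fV vV])
  have s2: "sum m'' V = sum m'' Vpp"
    using supp VppV fV by (intro sum.mono_neutral_right) auto
  have sm: "sum m'' Vpp = (d - (card J + 2)) - (j - (card J + 1))"
    using s1 s2 q(4) k(5) cj by simp
  have st: "std_mono Epp m''"
    unfolding std_mono_def
  proof
    fix e assume "e \<in> Epp"
    then have e: "e \<in> E" "e \<subseteq> Vpp" by (auto simp: Epp_def induced_def)
    obtain u where u: "u \<in> e" "m u = 0" using K_std[OF q(1) e(1)] by blast
    have "u \<noteq> v" using u(1) e(2) Vpp_disj by blast
    then show "\<exists>u\<in>e. m'' u = 0" using u by (auto simp: m''_def)
  qed
  have "j - (card J + 1) \<le> d - (card J + 2)" using cj by simp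
  then have "(S - insert v1 J, m'') \<in> Kpp (d - (card J + 2)) (j - (card J + 1))"
    using S''V cS'' supp sm st by (simp add: Kpp_def kbasis_iff)
  then show ?thesis using cj by (simp add: phi_def m''_def)
qed

lemma psi_in:
  assumes J: "J \<subseteq> N'" and dJ: "card J + 2 \<le> d" and j: "card J + 1 \<le> j"
    and y: "(S, m) \<in> Kpp (d - (card J + 2)) (j - (card J + 1))"
  shows "psi J (S, m) \<in> Q J j"
proof -
  have k: "S \<subseteq> Vpp" "card S = j - (card J + 1)" "j - (card J + 1) \<le> d - (card J + 2)"
      "\<forall>u. u \<notin> Vpp \<longrightarrow> m u = 0" "sum m Vpp = (d - (card J + 2)) - (j - (card J + 1))" "std_mono Epp m"
    using y by (auto simp: Kpp_def kbasis_iff)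
  define F where "F = insert v1 J"
  define mm where "mm = m(v := 1)"
  have FN: "F \<subseteq> insert v1 N'" using J by (auto simp: F_def)
  have FV: "F \<subseteq> V" using FN nbV by blast
  have fS: "finite S" using finite_subset[OF k(1) fVpp] .
  have fF: "finite F" using finite_subset[OF FV fV] .
  have dSF: "S \<inter> F = {}" using k(1) FN Vpp_disj by blast
  have SV: "S \<union> F \<subseteq> V" using k(1) VppV FV by blast
  have cSF: "card (S \<union> F) = j" using card_Un_disjoint[OF fS fF dSF] k(2) card_F[OF J] j by (simp add: F_def)
  have jd: "j \<le> d" using k(3) dJ j by simp
  have mv0: "m v = 0" using k(4) Vpp_disj by blast
  have supp: "\<forall>u. u \<notin> V \<longrightarrow> mm u = 0" using k(4) VppV vV by (auto simp: mm_def)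
  have s1: "sum mm V + m v = sum m V + 1" unfolding mm_def by (rule sum_upd[OF fV vV])
  have s2: "sum m V = sum m Vpp" using k(4) VppV fV by (intro sum.mono_neutral_right) auto
  have sm: "sum mm V = d - j" using s1 s2 mv0 k(5) j dJ k(3) by simp
  have zero_out: "mm u = 0" if "u \<in> insert v1 N'" for u
  proof -
    have "u \<noteq> v" using nbV[OF that] by simp
    moreover have "u \<notin> Vpp" using that Vpp_disj by blast
    ultimately show ?thesis using k(4) by (simp add: mm_def)
  qed
  have st: "std_mono E mm"
    unfolding std_mono_def
  proof
    fix e assume e: "e \<in> E"
    show "\<exists>u\<in>e. mm u = 0"
    proof (cases "e \<subseteq> Vpp")
      case True
      then have "e \<in> Epp" using e by (simp add: Epp_def induced_def)
      then obtain u where u: "u \<in> e" "m u = 0" using k(6) by (auto simp: std_mono_def)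
      have "u \<noteq> v" using u(1) True Vpp_disj by blast
      then show ?thesis using u by (auto simp: mm_def)
    next
      case False
      then obtain a where a: "a \<in> e" "a \<notin> Vpp" by blast
      have "a \<in> V" using edge[OF e] a(1) by auto
      then have "a = v \<or> a \<in> insert v1 N'" using a(2) by (simp add: Vpp_def)
      then show ?thesis
      proof
        assume "a = v"
        then obtain w where w: "w \<in> insert v1 N'" "e = {v, w}" using e_v[OF e] a(1) by blast
        then show ?thesis using zero_out[OF w(1)] by auto
      next
        assume "a \<in> insert v1 N'"
        then show ?thesis using zero_out a(1) by blast
      qed
    qed
  qed
  have inK: "(S \<union> F, mm) \<in> K j" using SV cSF jd supp sm st by (simp add: K_def kbasis_iff)
  have "v \<notin> S \<union> F" using k(1) Vpp_disj FN nbV by blast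
  moreover have "v1 \<in> S \<union> F" by (simp add: F_def)
  moreover have "mm v = 1" by (simp add: mm_def)
  moreover have "(S \<union> F) \<inter> N' = J" using k(1) Vpp_disj J v1N' by (auto simp: F_def)
  ultimately have "(S \<union> F, mm) \<in> Q J j" using QI[OF inK] by blast
  then show ?thesis by (simp add: psi_def F_def mm_def)
qed


definition "eps J x = ((- 1) ^ (\<Sum>u\<in>fst x - insert v1 J. card {t \<in> insert v1 J. t < u}) :: 'k::field)"

lemma neg1_sq: "((- 1 :: 'k::field) ^ a) * (- 1) ^ a = 1"
  by (simp flip: power_mult_distrib)

lemma eps_sq: "eps J x * eps J x = (1 :: 'k::field)"
  unfolding eps_def by (rule neg1_sq)

lemma phi_bij:
  assumes J: "J \<subseteq> N'" and dJ: "card J + 2 \<le> d"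
  shows "bij_betw (phi J) (Q J j) (shiftK (card J + 1) (Kpp (d - (card J + 2))) j)"
proof (rule bij_betw_byWitness[where f' = "psi J"])
  show "\<forall>a\<in>Q J j. psi J (phi J a) = a"
  proof
    fix a assume a: "a \<in> Q J j"
    obtain S m where as: "a = (S, m)" by (cases a)
    have q: "v1 \<in> S" "m v = 1" "S \<inter> N' = J" using QD[OF a[unfolded as]] by auto
    have "S - insert v1 J \<union> insert v1 J = S" using q by auto
    moreover have "(m(v := 0))(v := 1) = m" using q(2) by (auto simp: fun_eq_iff)
    ultimately show "psi J (phi J a) = a" using as by (simp add: psi_def phi_def)
  qed
  show "\<forall>a\<in>shiftK (card J + 1) (Kpp (d - (card J + 2))) j. phi J (psi J a) = a"
  proof
    fix a assume a: "a \<in> shiftK (card J + 1) (Kpp (d - (card J + 2))) j"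
    obtain S m where as: "a = (S, m)" by (cases a)
    have y: "(S, m) \<in> Kpp (d - (card J + 2)) (j - (card J + 1))"
      using a as by (auto simp: shiftK_def split: if_splits)
    have k: "S \<subseteq> Vpp" "\<forall>u. u \<notin> Vpp \<longrightarrow> m u = 0" using y by (auto simp: Kpp_def kbasis_iff)
    have "(S \<union> insert v1 J) - insert v1 J = S" using k(1) J Vpp_disj by blast
    moreover have "(m(v := 1))(v := 0) = m" using k(2) Vpp_disj by (auto simp: fun_eq_iff)
    ultimately show "phi J (psi J a) = a" using as by (simp add: psi_def phi_def)
  qed
  show "phi J ` Q J j \<subseteq> shiftK (card J + 1) (Kpp (d - (card J + 2))) j"
  proof
    fix b assume "b \<in> phi J ` Q J j"
    then obtain a where a: "a \<in> Q J j" "b = phi J a" by blast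
    obtain S m where as: "a = (S, m)" by (cases a)
    have x: "(S, m) \<in> Q J j" "b = phi J (S, m)" using a as by auto
    show "b \<in> shiftK (card J + 1) (Kpp (d - (card J + 2))) j"
      using phi_in[OF J dJ x(1)] x(2) by (simp add: shiftK_def)
  qed
  show "psi J ` shiftK (card J + 1) (Kpp (d - (card J + 2))) j \<subseteq> Q J j"
  proof
    fix b assume "b \<in> psi J ` shiftK (card J + 1) (Kpp (d - (card J + 2))) j"
    then obtain a where a: "a \<in> shiftK (card J + 1) (Kpp (d - (card J + 2))) j" "b = psi J a" by blast
    obtain S m where as: "a = (S, m)" by (cases a)
    have y: "(S, m) \<in> shiftK (card J + 1) (Kpp (d - (card J + 2))) j" "b = psi J (S, m)" using a as by auto
    have j: "card J + 1 \<le> j" and y': "(S, m) \<in> Kpp (d - (card J + 2)) (j - (card J + 1))"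
      using y(1) by (auto simp: shiftK_def split: if_splits)
    show "b \<in> Q J j" using psi_in[OF J dJ j y'] y(2) by simp
  qed
qed

lemma phi_coef:
  assumes J: "J \<subseteq> N'" and x: "(S, m) \<in> Q J (Suc j)" and y: "(T, m2) \<in> Q J j"
  shows "kcoef (phi J (S, m)) (phi J (T, m2)) = eps J (S, m) * eps J (T, m2) * (kcoef (S, m) (T, m2) :: 'k::field)"
proof -
  define F where "F = insert v1 J"
  define f where "f u = card {t \<in> F. t < u}" for u
  have qx: "(S, m) \<in> K (Suc j)" "v1 \<in> S" "v \<notin> S" "m v = 1" "S \<inter> N' = J" using QD[OF x] by auto
  have qy: "(T, m2) \<in> K j" "v1 \<in> T" "v \<notin> T" "m2 v = 1" "T \<inter> N' = J" using QD[OF y] by auto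
  have fS: "finite S" using KD[OF qx(1)] finite_subset[OF _ fV] by blast
  have FS: "F \<subseteq> S" and FT: "F \<subseteq> T" using qx qy by (auto simp: F_def)
  have phx: "phi J (S, m) = (S - F, m(v := 0))" and phy: "phi J (T, m2) = (T - F, m2(v := 0))"
    by (simp_all add: phi_def F_def)
  have ex: "eps J (S, m) = ((- 1) ^ (\<Sum>u\<in>S - F. f u) :: 'k)" and ey: "eps J (T, m2) = ((- 1) ^ (\<Sum>u\<in>T - F. f u) :: 'k)"
    by (simp_all add: eps_def F_def f_def)
  show ?thesis
  proof (cases "\<exists>s\<in>S. T = S - {s} \<and> m2 = m(s := Suc (m s))")
    case True
    then obtain s where s: "s \<in> S" "T = S - {s}" "m2 = m(s := Suc (m s))" by blast
    have sF: "s \<notin> F" using s(2) FT by auto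
    have sv: "s \<noteq> v" using s(1) qx(3) by auto
    have sSF: "s \<in> S - F" using s(1) sF by simp
    have TF: "T - F = (S - F) - {s}" using s(2) by auto
    have m2v: "m2(v := 0) = (m(v := 0))(s := Suc ((m(v := 0)) s))" using s(3) sv by (auto simp: fun_eq_iff)
    have c1: "kcoef (phi J (S, m)) (phi J (T, m2)) = ((- 1) ^ card {t \<in> S - F. t < s} :: 'k)"
      unfolding phx phy TF m2v by (rule kcoef_val[OF sSF])
    have c2: "kcoef (S, m) (T, m2) = ((- 1) ^ card {t \<in> S. t < s} :: 'k)"
      unfolding s(2,3) by (rule kcoef_val[OF s(1)])
    have "{t \<in> S. t < s} = {t \<in> S - F. t < s} \<union> {t \<in> F. t < s}" using FS by auto
    moreover have "{t \<in> S - F. t < s} \<inter> {t \<in> F. t < s} = {}" by auto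
    moreover have "finite {t \<in> S - F. t < s}" "finite {t \<in> F. t < s}"
      using fS finite_subset[OF FS fS] by auto
    ultimately have cc: "card {t \<in> S. t < s} = card {t \<in> S - F. t < s} + f s"
      unfolding f_def by (metis card_Un_disjoint)
    have sumx: "(\<Sum>u\<in>S - F. f u) = f s + (\<Sum>u\<in>T - F. f u)"
      unfolding TF using sum.remove[OF _ sSF, of f] fS by simp
    define a where "a = (\<Sum>u\<in>T - F. f u)"
    define b where "b = card {t \<in> S - F. t < s}"
    have "eps J (S, m) * eps J (T, m2) * kcoef (S, m) (T, m2) =
        ((- 1) ^ (f s + a) * (- 1) ^ a * (- 1) ^ (b + f s) :: 'k)"
      using ex ey c2 cc sumx by (simp add: a_def b_def)
    also have "\<dots> = ((- 1) ^ a * (- 1) ^ a) * ((- 1) ^ f s * (- 1) ^ f s) * ((- 1) ^ b :: 'k)"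
      by (simp add: power_add algebra_simps)
    also have "\<dots> = (- 1) ^ b" by (simp add: neg1_sq)
    finally show ?thesis using c1 by (simp add: b_def)
  next
    case False
    have z1: "kcoef (S, m) (T, m2) = (0::'k)"
    proof (rule ccontr)
      assume "kcoef (S, m) (T, m2) \<noteq> (0::'k)"
      from kcoef_nz[OF this] show False using False by blast
    qed
    have "kcoef (phi J (S, m)) (phi J (T, m2)) = (0::'k)"
    proof (rule ccontr)
      assume "kcoef (phi J (S, m)) (phi J (T, m2)) \<noteq> (0::'k)"
      from kcoef_nz[OF this[unfolded phx phy]]
      obtain s where s: "s \<in> S - F" "T - F = (S - F) - {s}" "m2(v := 0) = (m(v := 0))(s := Suc ((m(v := 0)) s))"
        by blast
      have sv: "s \<noteq> v" using s(1) qx(3) by auto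
      have "T = S - {s}"
      proof -
        have "T = (T - F) \<union> F" using FT by auto
        also have "\<dots> = ((S - F) - {s}) \<union> F" using s(2) by simp
        also have "\<dots> = S - {s}" using FS s(1) by auto
        finally show ?thesis .
      qed
      moreover have "m2 = m(s := Suc (m s))"
      proof
        fix u show "m2 u = (m(s := Suc (m s))) u"
        proof (cases "u = v")
          case True then show ?thesis using qx(4) qy(4) sv by simp
        next
          case False
          have "(m2(v := 0)) u = ((m(v := 0))(s := Suc ((m(v := 0)) s))) u" using s(3) by simp
          then show ?thesis using False sv by (auto split: if_splits)
        qed
      qed
      ultimately show False using False s(1) by blast
    qed
    then show ?thesis using z1 by simp
  qed
qed


lemma L6:
  assumes J: "J \<subseteq> N'"
  shows "hom (Q J) (kcoef :: _ \<Rightarrow> _ \<Rightarrow> 'k::field) i =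
    (if card J + 2 \<le> d \<and> card J + 1 \<le> i
     then betti_nat TYPE('k) Vpp Epp (i - (card J + 1)) (d - (card J + 2)) else 0)"
proof (cases "card J + 2 \<le> d")
  case True
  have iso: "hom (Q J) (kcoef :: _ \<Rightarrow> _ \<Rightarrow> 'k) i =
      hom (shiftK (card J + 1) (Kpp (d - (card J + 2)))) (kcoef :: _ \<Rightarrow> _ \<Rightarrow> 'k) i"
  proof (rule hom_iso[where \<phi> = "phi J" and \<epsilon> = "eps J"])
    show "fin (Q J)" by (rule fin_mono[OF finK]) (auto simp: Q_def R3_def P3_def)
    show "fin (shiftK (card J + 1) (Kpp (d - (card J + 2))))"
      by (rule fin_shiftK) (simp add: fin_def Kpp_def finite_kbasis[OF fVpp])
    show "bij_betw (phi J) (Q J j) (shiftK (card J + 1) (Kpp (d - (card J + 2))) j)" for j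
      by (rule phi_bij[OF J True])
    show "eps J x * eps J x = (1::'k)" for x by (rule eps_sq)
    show "kcoef (phi J x) (phi J y) = eps J x * eps J y * (kcoef x y :: 'k)"
      if "x \<in> Q J (Suc j)" "y \<in> Q J j" for j x y
    proof -
      obtain S m where xs: "x = (S, m)" by (cases x)
      obtain T m2 where ys: "y = (T, m2)" by (cases y)
      show ?thesis using phi_coef[OF J, of S m j T m2] that xs ys by simp
    qed
  qed
  have kpp: "Kpp e = (\<lambda>j. kbasis Vpp Epp j e)" for e by (simp add: Kpp_def[abs_def])
  show ?thesis
  proof (cases "card J + 1 \<le> i")
    case True2: True
    have "i = (i - (card J + 1)) + (card J + 1)" using True2 by simp
    then have "hom (shiftK (card J + 1) (Kpp (d - (card J + 2)))) (kcoef :: _ \<Rightarrow> _ \<Rightarrow> 'k) i =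
        hom (Kpp (d - (card J + 2))) (kcoef :: _ \<Rightarrow> _ \<Rightarrow> 'k) (i - (card J + 1))"
      using hom_shift by metis
    then show ?thesis using iso True True2 betti_hom[where 'k='k, symmetric] kpp by simp
  next
    case False
    then have lt: "i < card J + 1" by simp
    show ?thesis using iso True False hom_shift_low[OF lt, of "Kpp (d - (card J + 2))" "kcoef :: _ \<Rightarrow> _ \<Rightarrow> 'k"] by simp
  qed
next
  case False
  then show ?thesis using hom_empty[of "Q J" i] Q_empty[OF J False] by simp
qed

theorem main_nat:
  "betti_nat TYPE('k::field) V E i d = betti_nat TYPE('k) Vp Ep i d +
     (\<Sum>k = 0..card N'. (card N' choose k) *
        (if k + 2 \<le> d \<and> k + 1 \<le> i then betti_nat TYPE('k) Vpp Epp (i - (k + 1)) (d - (k + 2)) else 0))"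
proof -
  define g where "g k = (if k + 2 \<le> d \<and> k + 1 \<le> i then betti_nat TYPE('k) Vpp Epp (i - (k + 1)) (d - (k + 2)) else 0)" for k
  have fN: "finite N'" using finite_subset[OF N'V fV] .
  have "betti_nat TYPE('k) V E i d = hom K (kcoef :: _ \<Rightarrow> _ \<Rightarrow> 'k) i"
    using betti_hom by (simp add: K_def[abs_def])
  also have "\<dots> = hom A (kcoef :: _ \<Rightarrow> _ \<Rightarrow> 'k) i + hom B (kcoef :: _ \<Rightarrow> _ \<Rightarrow> 'k) i" by (rule L1)
  also have "hom A (kcoef :: _ \<Rightarrow> _ \<Rightarrow> 'k) i = betti_nat TYPE('k) Vp Ep i d"
    using betti_hom[where 'k='k, symmetric] A_eq by simp
  also have "hom B (kcoef :: _ \<Rightarrow> _ \<Rightarrow> 'k) i = (\<Sum>J\<in>Pow N'. hom (Q J) (kcoef :: _ \<Rightarrow> _ \<Rightarrow> 'k) i)"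
    using L3[where 'k='k] L4[where 'k='k] L5[where 'k='k] by simp
  also have "\<dots> = (\<Sum>J\<in>Pow N'. g (card J))"
    by (rule sum.cong[OF refl]) (use L6[where 'k='k] in \<open>simp add: g_def\<close>)
  also have "\<dots> = (\<Sum>k = 0..card N'. (card N' choose k) * g k)"
  proof -
    have "(\<Sum>J\<in>Pow N'. g (card J)) = (\<Sum>k = 0..card N'. \<Sum>J\<in>{J. J \<in> Pow N' \<and> card J = k}. g (card J))"
      by (rule sum.group[symmetric]) (use fN card_mono in auto)
    also have "\<dots> = (\<Sum>k = 0..card N'. (card N' choose k) * g k)"
    proof (rule sum.cong[OF refl])
      fix k
      have "(\<Sum>J\<in>{J. J \<in> Pow N' \<and> card J = k}. g (card J)) = (\<Sum>J\<in>{J. J \<in> Pow N' \<and> card J = k}. g k)"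
        by (rule sum.cong) auto
      also have "\<dots> = card {J. J \<in> Pow N' \<and> card J = k} * g k" by simp
      also have "card {J. J \<in> Pow N' \<and> card J = k} = card N' choose k"
        using n_subsets[OF fN, of k] by simp
      finally show "(\<Sum>J\<in>{J. J \<in> Pow N' \<and> card J = k}. g (card J)) = (card N' choose k) * g k" .
    qed
    finally show ?thesis .
  qed
  finally show ?thesis by (simp add: g_def)
qed

end


theorem theorem9p15:
  fixes V :: "'v::linorder set" and E :: "'v set set" and v :: 'v
    and vs :: "nat \<Rightarrow> 'v" and n :: nat and i d :: int
  assumes "forest V E"
    and "v \<in> V"
    and "n \<ge> 1"
    and "inj_on vs {1..n}"
    and "neighbours E v = vs ` {1..n}"
    and "\<forall>j\<in>{1..<n}. degree E (vs j) = 1"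
    and "n = 1 \<longrightarrow> degree E (vs 1) = 1"
  shows "betti TYPE('k::field) V E i d =
           betti TYPE('k) (V - {vs 1}) (induced E (V - {vs 1})) i d
           + (\<Sum>j = 0..n - 1. (n - 1 choose j) *
                betti TYPE('k) (V - ({v} \<union> vs ` {1..n})) (induced E (V - ({v} \<union> vs ` {1..n})))
                  (i - int (j + 1)) (d - int (j + 2)))"
proof -
  have sg: "simple_graph V E" using assms(1) by (simp add: forest_def)
  have n1: "{1..n} = insert 1 {2..n}" using assms(3) by auto
  have nb: "neighbours E v = insert (vs 1) (vs ` {2..n})" using assms(5) n1 by simp
  have v1N': "vs 1 \<notin> vs ` {2..n}"
  proof
    assume "vs 1 \<in> vs ` {2..n}"
    then obtain k where k: "k \<in> {2..n}" "vs k = vs 1" by auto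
    have "k = 1" using inj_onD[OF assms(4) k(2)] k(1) assms(3) by auto
    then show False using k(1) by simp
  qed
  have deg: "degree E (vs 1) = 1"
  proof (cases "n = 1")
    case True then show ?thesis using assms(7) by simp
  next
    case False then show ?thesis using assms(6) assms(3) by auto
  qed
  have "vs 1 \<in> neighbours E v" using nb by simp
  then have "{v, vs 1} \<in> E" by (simp add: neighbours_def)
  then have vin: "v \<in> neighbours E (vs 1)" by (simp add: neighbours_def insert_commute)
  have "card (neighbours E (vs 1)) = 1" using deg by (simp add: degree_def)
  then obtain w where "neighbours E (vs 1) = {w}" using card_1_singletonE by blast
  then have leaf: "neighbours E (vs 1) = {v}" using vin by simp
  interpret L: leafsetup V E v "vs 1" "vs ` {2..n}" "nat d"
    by unfold_locales (use sg assms(2) nb v1N' leaf in auto)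
  have cN: "card (vs ` {2..n}) = n - 1"
  proof -
    have "inj_on vs {2..n}" using inj_on_subset[OF assms(4)] by auto
    then show ?thesis using card_image by fastforce
  qed
  have Vpp: "L.Vpp = V - ({v} \<union> vs ` {1..n})" unfolding L.Vpp_def n1 by auto
  have Epp: "L.Epp = induced E (V - ({v} \<union> vs ` {1..n}))" unfolding L.Epp_def Vpp ..
  show ?thesis
  proof (cases "i < 0 \<or> d < 0")
    case True
    then show ?thesis by (auto simp: betti_def intro!: sum.neutral)
  next
    case False
    then have i0: "i \<ge> 0" and d0: "d \<ge> 0" by auto
    have main: "betti_nat TYPE('k) V E (nat i) (nat d) = betti_nat TYPE('k) L.Vp L.Ep (nat i) (nat d) +
     (\<Sum>k = 0..card (vs ` {2..n}). (card (vs ` {2..n}) choose k) *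
        (if k + 2 \<le> nat d \<and> k + 1 \<le> nat i then betti_nat TYPE('k) L.Vpp L.Epp (nat i - (k + 1)) (nat d - (k + 2)) else 0))"
      by (rule L.main_nat)
    have tm: "betti TYPE('k) (V - ({v} \<union> vs ` {1..n})) (induced E (V - ({v} \<union> vs ` {1..n})))
                  (i - int (k + 1)) (d - int (k + 2)) =
        (if k + 2 \<le> nat d \<and> k + 1 \<le> nat i then betti_nat TYPE('k) L.Vpp L.Epp (nat i - (k + 1)) (nat d - (k + 2)) else 0)" for k
    proof -
      note * = Vpp[symmetric] L.Epp_def
      have "nat (i - int (k + 1)) = nat i - (k + 1)" "nat (d - int (k + 2)) = nat d - (k + 2)" using i0 d0 by auto
      moreover have "(i - int (k + 1) < 0 \<or> d - int (k + 2) < 0) \<longleftrightarrow> \<not> (k + 2 \<le> nat d \<and> k + 1 \<le> nat i)"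
        using i0 d0 by auto
      ultimately show ?thesis unfolding * by (simp add: betti_def)
    qed
    have Vp: "L.Vp = V - {vs 1}" unfolding L.Vp_def ..
    have Ep: "L.Ep = induced E (V - {vs 1})" unfolding L.Ep_def Vp ..
    have main': "betti_nat TYPE('k) V E (nat i) (nat d) = betti_nat TYPE('k) (V - {vs 1}) (induced E (V - {vs 1})) (nat i) (nat d) +
     (\<Sum>k = 0..n - 1. (n - 1 choose k) *
        (if k + 2 \<le> nat d \<and> k + 1 \<le> nat i then betti_nat TYPE('k) L.Vpp L.Epp (nat i - (k + 1)) (nat d - (k + 2)) else 0))"
      using main unfolding Vp Ep cN .
    have s: "(\<Sum>j = 0..n - 1. (n - 1 choose j) *
                betti TYPE('k) (V - ({v} \<union> vs ` {1..n})) (induced E (V - ({v} \<union> vs ` {1..n})))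
                  (i - int (j + 1)) (d - int (j + 2))) =
       (\<Sum>k = 0..n - 1. (n - 1 choose k) *
        (if k + 2 \<le> nat d \<and> k + 1 \<le> nat i then betti_nat TYPE('k) L.Vpp L.Epp (nat i - (k + 1)) (nat d - (k + 2)) else 0))"
      by (rule sum.cong[OF refl]) (simp only: tm)
    have b1: "betti TYPE('k) V E i d = betti_nat TYPE('k) V E (nat i) (nat d)" using i0 d0 by (simp add: betti_def)
    have b2: "betti TYPE('k) (V - {vs 1}) (induced E (V - {vs 1})) i d =
        betti_nat TYPE('k) (V - {vs 1}) (induced E (V - {vs 1})) (nat i) (nat d)" using i0 d0 by (simp add: betti_def)
    show ?thesis unfolding s b1 b2 by (rule main')
  qed
qed


end
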